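(* There exists $c<\infty$ such that the following holds. Let $U\in\mathbb R$, let $K$ be a hull with $r=r_K<1/2$, let $z=x+iy\in\mathbb H$, and write $f=f_{K+U}$, $h=h_K$. Then $\operatorname{Im}[f(z)]\ge y$. Moreover, if $\delta=r^{1/4}$ and $y\ge\delta$, then \[\Big|f(z)-z+\frac{h}{z-U}\Big|\le ch\delta^2,\qquad \Big|f'(z)-1-\frac{h}{(z-U)^2}\Big|\le ch\delta,\] \[\Big|\operatorname{Im}[f(z)]-y\Big[1+\frac{h}{|z-U|^2}\Big]\Big|\le cyh\delta.\]
   Context: A (compact $\mathbb H$-)hull is a bounded, relatively closed set $K\subset\mathbb H$ such that $\mathbb H\setminus K$ is simply connected; $g_K:\mathbb H\setminus K\to\mathbb H$ is the conformal map with $g_K(z)=z+h_K/z+O(|z|^{-2})$ at $\infty$, $h_K=\operatorname{hcap}(K)$, $r_K=\sup\{|z|:z\in K\}$. $f_K=g_K^{-1}:\mathbb H\to\mathbb H\setminus K$, so $f_K(z)=z-h_K/z+o(|z|^{-1})$. For $U\in\mathbb R$, $K+U$ denotes the translate and $h_{K+U}=h_K$. *)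

theory Defs
  imports "HOL-Analysis.Analysis"
begin

definition upper_half :: "complex set" where
  "upper_half = {z. Im z > 0}"

definition is_hull :: "complex set \<Rightarrow> bool" where
  "is_hull K \<longleftrightarrow> K \<subseteq> upper_half \<and> bounded K \<and> closedin (top_of_set upper_half) K
     \<and> simply_connected (upper_half - K)"

definition hull_rad :: "complex set \<Rightarrow> real" where
  "hull_rad K = (if K = {} then 0 else Sup (norm ` K))"

text \<open>g is the conformal map from H - K onto H with hydrodynamic normalization
  g(z) = z + h/z + O(|z|^-2) at infinity; h is then the half-plane capacity of K.\<close>
definition mapping_out :: "complex set \<Rightarrow> (complex \<Rightarrow> complex) \<Rightarrow> real \<Rightarrow> bool" where
  "mapping_out K g h \<longleftrightarrow> g holomorphic_on (upper_half - K) \<and> bij_betw g (upper_half - K) upper_half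
     \<and> (\<exists>C R. \<forall>z \<in> upper_half - K. norm z \<ge> R \<longrightarrow>
            norm (g z - z - of_real h / z) \<le> C / (norm z)^2)"

definition translate_hull :: "complex set \<Rightarrow> real \<Rightarrow> complex set" where
  "translate_hull K U = (\<lambda>w. w + of_real U) ` K"

end

theory Submission
  imports Defs "HOL-Complex_Analysis.Complex_Analysis"
begin

lemma open_upper_half: "open upper_half"
  unfolding upper_half_def by (simp add: open_halfspace_Im_gt)

locale conf_setup =
  fixes D :: "complex set" and g :: "complex \<Rightarrow> complex" and h :: real and U r :: real
  assumes openD: "open D" and DH: "D \<subseteq> upper_half"
    and Dout: "\<And>w. Im w > 0 \<Longrightarrow> r < cmod (w - of_real U) \<Longrightarrow> w \<in> D"
    and rpos: "0 < r" and rlt: "r < 1"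
    and holg: "g holomorphic_on D" and injg: "inj_on g D" and img: "g ` D = upper_half"
    and expn: "\<exists>C R. \<forall>w\<in>D. R \<le> cmod w \<longrightarrow> cmod (g w - w - of_real h / w) \<le> C / (cmod w)^2"
begin

definition f where "f = inv_into D g"

lemma f_in: assumes "Im z > 0" shows "f z \<in> D" "g (f z) = z"
proof -
  have "z \<in> g ` D" using img assms by (simp add: upper_half_def)
  then show "f z \<in> D" "g (f z) = z" unfolding f_def by (auto simp: inv_into_into f_inv_into_f)
qed

lemma f_g: "w \<in> D \<Longrightarrow> f (g w) = w"
  unfolding f_def using injg by simp

lemma g_in: "w \<in> D \<Longrightarrow> Im (g w) > 0"
  using img by (auto simp: upper_half_def)

lemma D_Im: "w \<in> D \<Longrightarrow> Im w > 0"
  using DH by (auto simp: upper_half_def)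

lemma holf: "f holomorphic_on upper_half"
proof -
  obtain k where k: "k holomorphic_on (g ` D)" "\<And>z. z \<in> D \<Longrightarrow> k (g z) = z"
    using holomorphic_has_inverse[OF holg openD injg] by metis
  have "f holomorphic_on (g ` D)"
  proof (rule holomorphic_transform[OF k(1)])
    fix x assume "x \<in> g ` D" then obtain w where "w \<in> D" "x = g w" by auto
    then show "k x = f x" using k(2) f_g by simp
  qed
  then show ?thesis using img by simp
qed

lemma g_close: assumes "e > 0" shows "\<exists>R>0. \<forall>w\<in>D. R \<le> cmod w \<longrightarrow> cmod (g w - w) \<le> e"
proof -
  obtain C R where CR: "\<forall>w\<in>D. R \<le> cmod w \<longrightarrow> cmod (g w - w - of_real h / w) \<le> C / (cmod w)^2"
    using expn by blast
  define R' where "R' = max (max R 1) ((\<bar>h\<bar> + \<bar>C\<bar>) / e)"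
  have "R' > 0" unfolding R'_def by simp
  moreover have "cmod (g w - w) \<le> e" if "w \<in> D" "R' \<le> cmod w" for w
  proof -
    have w1: "1 \<le> cmod w" and wR: "R \<le> cmod w" and we: "(\<bar>h\<bar> + \<bar>C\<bar>) / e \<le> cmod w"
      using that unfolding R'_def by auto
    have "cmod (g w - w) \<le> cmod (g w - w - of_real h / w) + cmod (of_real h / w)"
      by (metis add.commute diff_add_cancel norm_triangle_ineq)
    also have "\<dots> \<le> C / (cmod w)^2 + \<bar>h\<bar> / cmod w"
      using CR that wR by (auto simp: norm_divide)
    also have "C / (cmod w)^2 \<le> \<bar>C\<bar> / cmod w"
    proof -
      have "C / (cmod w)^2 \<le> \<bar>C\<bar> / (cmod w)^2" by (simp add: divide_right_mono)
      also have "\<dots> \<le> \<bar>C\<bar> / cmod w"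
      proof (rule divide_left_mono)
        show "cmod w \<le> (cmod w)^2" using w1 mult_right_mono[of 1 "cmod w" "cmod w"] by (simp add: power2_eq_square)
        show "0 < (cmod w)^2 * cmod w" using w1 by (intro mult_pos_pos) auto
      qed simp
      finally show ?thesis .
    qed
    hence "C / (cmod w)^2 + \<bar>h\<bar> / cmod w \<le> (\<bar>h\<bar> + \<bar>C\<bar>) / cmod w" by (simp add: add_divide_distrib)
    also have "\<dots> \<le> e" using we w1 \<open>e > 0\<close> by (simp add: divide_le_eq mult.commute pos_divide_le_eq)
    finally show ?thesis by linarith
  qed
  ultimately show ?thesis by blast
qed

lemma brouwer_step:
  assumes "\<rho> > 0" "cball z \<rho> \<subseteq> D" "\<And>w. w \<in> cball z \<rho> \<Longrightarrow> cmod (g w - w) \<le> \<rho>" "Im z > 0"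
  shows "cmod (f z - z) \<le> \<rho>"
proof -
  have contg: "continuous_on (cball z \<rho>) g"
    using assms(2) holg holomorphic_on_imp_continuous_on holomorphic_on_subset by blast
  obtain w where w: "w \<in> cball z \<rho>" "(\<lambda>w. w + z - g w) w = w"
  proof (rule brouwer[of "cball z \<rho>" "\<lambda>w. w + z - g w"])
    show "compact (cball z \<rho>)" "convex (cball z \<rho>)" "cball z \<rho> \<noteq> {}" using assms by auto
    show "continuous_on (cball z \<rho>) (\<lambda>w. w + z - g w)" by (intro continuous_intros contg)
    show "(\<lambda>w. w + z - g w) \<in> cball z \<rho> \<rightarrow> cball z \<rho>"
    proof
      fix w assume "w \<in> cball z \<rho>"
      then have "cmod (g w - w) \<le> \<rho>" using assms(3) by blast
      then show "w + z - g w \<in> cball z \<rho>" by (simp add: dist_norm norm_minus_commute)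
    qed
  qed
  then have "g w = z" by simp
  then have "f z = w" using f_g w assms(2) by blast
  then show ?thesis using w by (simp add: dist_norm norm_minus_commute)
qed

lemma f_close: assumes "e > 0" shows "\<exists>R. \<forall>z. R \<le> cmod z \<longrightarrow> e \<le> Im z \<longrightarrow> cmod (f z - z) \<le> e/2"
proof -
  obtain R1 where R1: "R1 > 0" "\<forall>w\<in>D. R1 \<le> cmod w \<longrightarrow> cmod (g w - w) \<le> e/2"
    using g_close[of "e/2"] assms by auto
  define R where "R = R1 + \<bar>U\<bar> + r + e"
  have "cmod (f z - z) \<le> e/2" if z: "R \<le> cmod z" "e \<le> Im z" for z
  proof (rule brouwer_step)
    show "e/2 > 0" "Im z > 0" using assms z by auto
    have wD: "w \<in> D" and wR: "R1 \<le> cmod w" if "w \<in> cball z (e/2)" for w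
    proof -
      have d: "cmod (z - w) \<le> e/2" using that by (simp add: dist_norm)
      have "\<bar>Im z - Im w\<bar> \<le> e/2" using d abs_Im_le_cmod[of "z - w"] by simp
      then have "Im w > 0" using z assms by linarith
      have "cmod z \<le> cmod w + cmod (z - w)" by (metis add.commute diff_add_cancel norm_triangle_ineq)
      then have cw: "cmod w \<ge> R - e/2" using z d by linarith
      have "cmod w \<le> cmod (w - of_real U) + cmod (of_real U :: complex)"
        by (metis diff_add_cancel norm_triangle_ineq)
      then have "cmod (w - of_real U) > r" using cw assms R1(1) unfolding R_def by (simp add: norm_of_real) 
      then show "w \<in> D" using Dout \<open>Im w > 0\<close> by blast
      show "R1 \<le> cmod w" using cw assms unfolding R_def
        using rpos by (smt (verit) abs_ge_zero field_sum_of_halves)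
    qed
    show "cball z (e/2) \<subseteq> D" using wD by blast
    show "\<And>w. w \<in> cball z (e/2) \<Longrightarrow> cmod (g w - w) \<le> e/2" using wD wR R1 by blast
  qed
  then show ?thesis by blast
qed

end

context conf_setup begin

lemma Im_f_ge: assumes z0: "Im z0 > 0" shows "Im z0 \<le> Im (f z0)"
proof -
  have key: "Im z0 - Im (f z0) \<le> \<eta>" if "\<eta> > 0" for \<eta>
  proof -
    define e where "e = min \<eta> (Im z0 / 2)"
    have e: "e > 0" "e \<le> \<eta>" "e < Im z0" using that z0 unfolding e_def by auto
    obtain R where R: "\<forall>z. R \<le> cmod z \<longrightarrow> e \<le> Im z \<longrightarrow> cmod (f z - z) \<le> e/2"
      using f_close[OF e(1)] by blast
    define R' where "R' = max R (cmod z0 + 1)"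
    define S where "S = {z. e \<le> Im z} \<inter> cball 0 R'"
    have SH: "S \<subseteq> upper_half" using e unfolding S_def upper_half_def by auto
    have clS: "closed S" unfolding S_def
      by (intro closed_Int closed_cball) (simp add: closed_halfspace_Im_ge)
    have bS: "bounded S" unfolding S_def by (simp add: bounded_Int)
    have fr: "Im z = e \<or> cmod z = R'" if "z \<in> frontier S" for z
    proof (rule ccontr)
      assume nz: "\<not> (Im z = e \<or> cmod z = R')"
      have zS: "z \<in> S" using that clS by (simp add: frontier_def)
      then have "e < Im z" "cmod z < R'" using nz unfolding S_def by auto
      moreover have "open ({z. e < Im z} \<inter> ball 0 R')" by (simp add: open_Int open_halfspace_Im_gt)
      moreover have "{z. e < Im z} \<inter> ball 0 R' \<subseteq> S" unfolding S_def by auto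
      ultimately have "z \<in> interior S" using interior_maximal by (metis IntI mem_Collect_eq mem_ball_0 subsetD)
      then show False using that by (simp add: frontier_def)
    qed
    have "Re ((\<lambda>z. \<i> * (f z - z)) z0) \<le> \<eta>"
    proof (rule maximum_real_frontier[where S=S and f="\<lambda>z. \<i> * (f z - z)"])
      show "(\<lambda>z. \<i> * (f z - z)) holomorphic_on interior S"
        using holf SH interior_subset by (intro holomorphic_intros) (auto intro: holomorphic_on_subset)
      have "closure S = S" using clS by simp
      then show "continuous_on (closure S) (\<lambda>z. \<i> * (f z - z))"
        using holf SH by (intro continuous_intros holomorphic_on_imp_continuous_on) (auto intro: holomorphic_on_subset)
      show "bounded S" by fact
      show "z0 \<in> S" using e unfolding S_def R'_def by auto
      fix z assume zf: "z \<in> frontier S"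
      have zS: "z \<in> S" using zf clS by (simp add: frontier_def)
      then have zH: "Im z > 0" using SH by (auto simp: upper_half_def)
      have fzpos: "Im (f z) > 0" using f_in[OF zH] D_Im by blast
      have "Re (\<i> * (f z - z)) = Im z - Im (f z)" by simp
      moreover have "Im z - Im (f z) \<le> \<eta>"
        using fr[OF zf]
      proof
        assume "Im z = e" then show ?thesis using fzpos e by linarith
      next
        assume "cmod z = R'"
        then have "R \<le> cmod z" unfolding R'_def by simp
        moreover have "e \<le> Im z" using zS unfolding S_def by simp
        ultimately have "cmod (f z - z) \<le> e/2" using R by blast
        moreover have "Im z - Im (f z) \<le> cmod (f z - z)"
          using abs_Im_le_cmod[of "f z - z"] by simp
        ultimately show ?thesis using e by linarith
      qed
      ultimately show "Re (\<i> * (f z - z)) \<le> \<eta>" by simp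
    qed
    then show ?thesis by simp
  qed
  have "Im z0 - Im (f z0) \<le> 0"
    by (rule field_le_epsilon) (use key in simp)
  then show ?thesis by simp
qed

lemma Im_g_le: assumes "w \<in> D" shows "Im (g w) \<le> Im w"
  using Im_f_ge[OF g_in[OF assms]] f_g[OF assms] by simp

end

lemma Im_div_real: "Im (of_real a / t) = - a * Im t / (cmod t)^2"
  by (simp add: Im_divide cmod_power2 )

lemma deriv_bound_Im:
  assumes hol: "Fh holomorphic_on ball c \<rho>" and "\<rho> > 0" "B > 0"
    and bd: "\<And>\<zeta>. \<zeta> \<in> ball c \<rho> \<Longrightarrow> \<bar>Im (Fh \<zeta>) - Im (Fh c)\<bar> \<le> B"
  shows "cmod (deriv Fh c) \<le> 4 * B / \<rho>"
proof -
  define \<Phi> where "\<Phi> = (\<lambda>\<xi>. Fh (c + of_real \<rho> * \<xi>) - Fh c)"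
  define \<Psi> where "\<Psi> = (\<lambda>\<xi>. \<Phi> \<xi> / (\<Phi> \<xi> - 4 * \<i> * of_real B))"
  have inball: "c + of_real \<rho> * \<xi> \<in> ball c \<rho>" if "norm \<xi> < 1" for \<xi>
    using that \<open>\<rho> > 0\<close> by (simp add: dist_norm norm_mult)
  have ImPhi: "Im (\<Phi> \<xi>) \<le> B" if "norm \<xi> < 1" for \<xi>
    using bd[OF inball[OF that]] unfolding \<Phi>_def by simp
  have den: "\<Phi> \<xi> - 4 * \<i> * of_real B \<noteq> 0" if "norm \<xi> < 1" for \<xi>
  proof
    assume "\<Phi> \<xi> - 4 * \<i> * of_real B = 0"
    then have "Im (\<Phi> \<xi> - 4 * \<i> * of_real B) = 0" by simp
    then have "Im (\<Phi> \<xi>) = 4 * B" by simp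
    then show False using ImPhi[OF that] \<open>B > 0\<close> by simp
  qed
  have holPhi: "\<Phi> holomorphic_on ball 0 1"
    unfolding \<Phi>_def
    by (intro holomorphic_intros holomorphic_on_compose_gen[OF _ hol, unfolded o_def]) (auto intro: inball)
  have holPsi: "\<Psi> holomorphic_on ball 0 1"
    unfolding \<Psi>_def using den by (intro holomorphic_intros holPhi) auto
  have Psi0: "\<Psi> 0 = 0" unfolding \<Psi>_def \<Phi>_def by simp
  have Psilt: "norm (\<Psi> \<xi>) < 1" if "norm \<xi> < 1" for \<xi>
  proof -
    define a where "a = \<Phi> \<xi>"
    have ia: "Im a \<le> B" using ImPhi[OF that] unfolding a_def by simp
    have "(cmod a)^2 < (cmod (a - 4 * \<i> * of_real B))^2"
      unfolding cmod_power2 using ia \<open>B > 0\<close> by (simp add: power2_eq_square algebra_simps)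
    then have "cmod a < cmod (a - 4 * \<i> * of_real B)"
      using power_less_imp_less_base by fastforce
    then show ?thesis unfolding \<Psi>_def a_def[symmetric] using den[OF that] unfolding a_def[symmetric]
      by (simp add: norm_divide divide_less_eq)
  qed
  have dPsi: "norm (deriv \<Psi> 0) \<le> 1"
    using Schwarz_Lemma(2)[OF holPsi Psi0 Psilt, of 0] by simp
  have dFh: "(Fh has_field_derivative deriv Fh c) (at c)"
    using hol \<open>\<rho> > 0\<close> by (intro holomorphic_derivI[of _ "ball c \<rho>"]) auto
  have dPhi: "(\<Phi> has_field_derivative (deriv Fh c * of_real \<rho>)) (at 0)"
  proof -
    have "((\<lambda>\<xi>. c + of_real \<rho> * \<xi>) has_field_derivative of_real \<rho>) (at 0)"
      by (auto intro!: derivative_eq_intros)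
    from DERIV_chain2[OF _ this, of Fh "deriv Fh c"] dFh
    have "((\<lambda>\<xi>. Fh (c + of_real \<rho> * \<xi>)) has_field_derivative deriv Fh c * of_real \<rho>) (at 0)" by simp
    then show ?thesis unfolding \<Phi>_def by (auto intro!: derivative_eq_intros)
  qed
  have Phi0: "\<Phi> 0 = 0" unfolding \<Phi>_def by simp
  have "(\<Psi> has_field_derivative (deriv Fh c * of_real \<rho>) / (- 4 * \<i> * of_real B)) (at 0)"
  proof -
    have "(\<Psi> has_field_derivative ((deriv Fh c * of_real \<rho>) * (\<Phi> 0 - 4 * \<i> * of_real B) - \<Phi> 0 * (deriv Fh c * of_real \<rho>)) / ((\<Phi> 0 - 4 * \<i> * of_real B) * (\<Phi> 0 - 4 * \<i> * of_real B))) (at 0)"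
      unfolding \<Psi>_def
      by (rule DERIV_divide[OF dPhi]) (use dPhi den[of 0] in \<open>auto intro!: derivative_eq_intros\<close>)
    moreover have "((deriv Fh c * of_real \<rho>) * (\<Phi> 0 - 4 * \<i> * of_real B) - \<Phi> 0 * (deriv Fh c * of_real \<rho>)) / ((\<Phi> 0 - 4 * \<i> * of_real B) * (\<Phi> 0 - 4 * \<i> * of_real B))
        = (deriv Fh c * of_real \<rho>) / (- 4 * \<i> * of_real B)"
      using \<open>B > 0\<close> unfolding Phi0 by (simp add: field_simps)
    ultimately show ?thesis by simp
  qed
  then have "deriv \<Psi> 0 = (deriv Fh c * of_real \<rho>) / (- 4 * \<i> * of_real B)"
    by (rule DERIV_imp_deriv)
  with dPsi have "cmod (deriv Fh c) * \<rho> / (4 * B) \<le> 1"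
    using \<open>B > 0\<close> \<open>\<rho> > 0\<close> by (simp add: norm_divide norm_mult)
  then show ?thesis using \<open>B > 0\<close> \<open>\<rho> > 0\<close> by (simp add: field_simps)
qed

context conf_setup begin

definition W where "W t = of_real U - of_real r / t"
definition F where "F t = - of_real r * (g (W t) - W t)"
definition Tp where "Tp = {t. 0 < Im t \<and> cmod t < 1}"

lemma open_Tp: "open Tp"
proof -
  have "Tp = {t. 0 < Im t} \<inter> ball 0 1" unfolding Tp_def by auto
  show ?thesis unfolding \<open>Tp = _\<close> by (intro open_Int open_halfspace_Im_gt open_ball)
qed

lemma W_Im: "Im (W t) = r * Im t / (cmod t)^2"
  unfolding W_def by (simp add: Im_div_real)

lemma W_in: assumes "t \<in> Tp" shows "W t \<in> D"
proof (rule Dout)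
  have t: "0 < Im t" "cmod t < 1" using assms unfolding Tp_def by auto
  then have "t \<noteq> 0" by auto
  then show "0 < Im (W t)" unfolding W_Im using t rpos by (simp add: divide_pos_pos)
  have "cmod (W t - of_real U) = r / cmod t" unfolding W_def using rpos by (simp add: norm_divide)
  moreover have "r < r / cmod t" using t rpos \<open>t \<noteq> 0\<close> by (simp add: less_divide_eq)
  ultimately show "r < cmod (W t - of_real U)" by simp
qed

lemma hol_F: "F holomorphic_on Tp"
proof -
  have "W holomorphic_on Tp" unfolding W_def Tp_def by (intro holomorphic_intros) auto
  moreover have "g holomorphic_on W ` Tp" using holg W_in by (auto intro: holomorphic_on_subset)
  ultimately have "(g \<circ> W) holomorphic_on Tp" by (rule holomorphic_on_compose)
  then show ?thesis unfolding F_def o_def using \<open>W holomorphic_on Tp\<close> by (intro holomorphic_intros) auto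
qed

lemma F_Im: assumes "t \<in> Tp" shows "0 \<le> Im (F t)" "Im (F t) \<le> r^2 * Im t / (cmod t)^2"
proof -
  have wD: "W t \<in> D" by (rule W_in[OF assms])
  have e: "Im (F t) = r * (Im (W t) - Im (g (W t)))" unfolding F_def by (simp add: algebra_simps)
  show "0 \<le> Im (F t)" unfolding e using Im_g_le[OF wD] rpos by simp
  have "Im (F t) \<le> r * Im (W t)" unfolding e using g_in[OF wD] rpos by (simp add: algebra_simps)
  also have "\<dots> = r^2 * Im t / (cmod t)^2" unfolding W_Im by (simp add: power2_eq_square)
  finally show "Im (F t) \<le> r^2 * Im t / (cmod t)^2" .
qed

end

context conf_setup begin

lemma F_near0: "\<exists>C3 d0. d0 > 0 \<and> (\<forall>t\<in>Tp. cmod t < d0 \<longrightarrow> cmod (F t - of_real h * t) \<le> C3 * (cmod t)^2)"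
proof -
  obtain C R where CR: "\<forall>w\<in>D. R \<le> cmod w \<longrightarrow> cmod (g w - w - of_real h / w) \<le> C / (cmod w)^2"
    using expn by blast
  define M where "M = \<bar>U\<bar> + max R 1 + 1"
  have Mpos: "M > 0" unfolding M_def by simp
  define d0 where "d0 = r / (2 * M)"
  have d0: "d0 > 0" unfolding d0_def using rpos Mpos by simp
  define C3 where "C3 = 4 * \<bar>C\<bar> / r + 2 * \<bar>h\<bar> * \<bar>U\<bar> / r"
  have "cmod (F t - of_real h * t) \<le> C3 * (cmod t)^2" if tT: "t \<in> Tp" and td: "cmod t < d0" for t
  proof -
    have t0: "t \<noteq> 0" using tT unfolding Tp_def by auto
    have nt: "cmod t > 0" using t0 by simp
    have "cmod t * M < r / 2" using td Mpos unfolding d0_def by (simp add: field_simps)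
    have UM: "\<bar>U\<bar> \<le> M" and RM: "max R 1 + 1 \<le> M" unfolding M_def by auto
    have Ut: "\<bar>U\<bar> * cmod t \<le> r / 2"
      using mult_right_mono[OF UM, of "cmod t"] \<open>cmod t * M < r / 2\<close> by (simp add: mult.commute)
    have tM: "cmod t * (max R 1 + 1) \<le> r/2"
      using mult_left_mono[OF RM, of "cmod t"] \<open>cmod t * M < r / 2\<close> by simp
    define w where "w = W t"
    have wD: "w \<in> D" unfolding w_def by (rule W_in[OF tT])
    have weq: "w = (of_real U * t - of_real r) / t" unfolding w_def W_def using t0 by (simp add: field_simps)
    have den: "cmod (of_real U * t - of_real r) \<ge> r / 2"
    proof -
      have "cmod (of_real r :: complex) \<le> cmod (of_real U * t - of_real r) + cmod (of_real U * t)"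
        by (metis add.commute diff_add_cancel norm_minus_commute norm_triangle_ineq)
      then show ?thesis using Ut rpos by (simp add: norm_mult)
    qed
    then have den0: "of_real U * t - of_real r \<noteq> 0" using rpos by auto
    have wlow: "cmod w \<ge> (r/2) / cmod t"
    proof -
      have "(r/2) / cmod t \<le> cmod (of_real U * t - of_real r) / cmod t" by (rule divide_right_mono[OF den]) simp
      then show ?thesis unfolding weq by (simp add: norm_divide)
    qed
    have "(r/2) / cmod t \<ge> max R 1 + 1" using tM nt by (simp add: field_simps)
    then have wR: "cmod w \<ge> R" and w1: "cmod w \<ge> 1" using wlow by auto
    have rw: "r \<le> 2 * cmod t * cmod w" using wlow nt by (simp add: field_simps)
    have inv_w: "1 / cmod w \<le> 2 * cmod t / r"
    proof -
      have "1 / cmod w = r / (r * cmod w)" using rpos w1 by simp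
      also have "\<dots> \<le> (2 * cmod t * cmod w) / (r * cmod w)" using rw rpos w1 by (intro divide_right_mono) auto
      also have "\<dots> = 2 * cmod t / r" using rpos w1 by (auto simp: field_simps)
      finally show ?thesis .
    qed
    have E: "cmod (g w - w - of_real h / w) \<le> \<bar>C\<bar> * (4 * (cmod t)^2 / r^2)"
    proof -
      have "cmod (g w - w - of_real h / w) \<le> C / (cmod w)^2" using CR wD wR by blast
      also have "\<dots> \<le> \<bar>C\<bar> * (1 / cmod w)^2" by (simp add: power_one_over divide_right_mono) 
      also have "\<dots> \<le> \<bar>C\<bar> * (2 * cmod t / r)^2"
        using inv_w w1 by (intro mult_left_mono power_mono) auto
      also have "\<dots> = \<bar>C\<bar> * (4 * (cmod t)^2 / r^2)" by (simp add: power2_eq_square)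
      finally show ?thesis .
    qed
    have split: "F t - of_real h * t = - of_real r * (g w - w - of_real h / w) + of_real h * (- of_real U * t^2 / (of_real U * t - of_real r))"
    proof -
      have w0: "w \<noteq> 0" using w1 by auto
      show ?thesis unfolding F_def w_def[symmetric] using t0 den0 weq w0 apply (simp add: field_simps power2_eq_square) by algebra
    qed
    have "cmod (F t - of_real h * t) \<le> r * (\<bar>C\<bar> * (4 * (cmod t)^2 / r^2)) + \<bar>h\<bar> * (\<bar>U\<bar> * (cmod t)^2 / (r/2))"
    proof -
      have "cmod (F t - of_real h * t) \<le> cmod (- of_real r * (g w - w - of_real h / w)) + cmod (of_real h * (- of_real U * t^2 / (of_real U * t - of_real r)))"
        unfolding split by (rule norm_triangle_ineq)
      also have "cmod (- of_real r * (g w - w - of_real h / w)) \<le> r * (\<bar>C\<bar> * (4 * (cmod t)^2 / r^2))"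
        using mult_left_mono[OF E, of r] rpos by (simp add: norm_mult)
      also have "cmod (of_real h * (- of_real U * t^2 / (of_real U * t - of_real r))) \<le> \<bar>h\<bar> * (\<bar>U\<bar> * (cmod t)^2 / (r/2))"
      proof -
        have "\<bar>U\<bar> * (cmod t)^2 / cmod (of_real U * t - of_real r) \<le> \<bar>U\<bar> * (cmod t)^2 / (r/2)"
          by (rule divide_left_mono) (use den rpos in \<open>auto intro!: mult_pos_pos\<close>)
        from mult_left_mono[OF this, of "\<bar>h\<bar>"] show ?thesis by (simp add: norm_mult norm_divide norm_power)
      qed
      finally show ?thesis by simp
    qed
    also have "\<dots> = C3 * (cmod t)^2" unfolding C3_def using rpos by (simp add: field_simps power2_eq_square)
    finally show ?thesis .
  qed
  then show ?thesis using d0 by blast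
qed

end

lemma lipschitz_uc:
  assumes L: "\<And>x y. x \<in> X \<Longrightarrow> y \<in> X \<Longrightarrow> cmod (f x - f y) \<le> L * cmod (x - y)" and "L \<ge> 0"
  shows "uniformly_continuous_on X (f :: complex \<Rightarrow> complex)"
  unfolding uniformly_continuous_on_def
proof (intro allI impI)
  fix e :: real assume e: "e > 0"
  show "\<exists>d>0. \<forall>x\<in>X. \<forall>x'\<in>X. dist x' x < d \<longrightarrow> dist (f x') (f x) < e"
  proof (intro exI[of _ "e / (L + 1)"] conjI ballI impI)
    show "e / (L + 1) > 0" using e \<open>L \<ge> 0\<close> by simp
    fix x x' assume xx: "x \<in> X" "x' \<in> X" "dist x' x < e / (L + 1)"
    have "dist (f x') (f x) \<le> L * dist x' x" using L[OF xx(2,1)] by (simp add: dist_norm)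
    also have "\<dots> \<le> L * (e / (L+1))" using xx(3) \<open>L \<ge> 0\<close> by (intro mult_left_mono) auto
    also have "\<dots> < e" using e \<open>L \<ge> 0\<close> by (simp add: field_simps)
    finally show "dist (f x') (f x) < e" .
  qed
qed

context conf_setup begin

lemma F_deriv_bound:
  assumes "a > 0" and t: "0 < Im t" "Im t < (2/25)" "cmod t < (24/25)" "a \<le> cmod t"
  shows "cmod (deriv F t) \<le> 48 / a^2"
proof -
  define \<rho> where "\<rho> = Im t / 2"
  define B where "B = 6 * Im t / a^2"
  have \<rho>: "\<rho> > 0" "\<rho> < (1/25)" unfolding \<rho>_def using t by auto
  have B: "B > 0" unfolding B_def using t assms by simp
  have ballT: "ball t \<rho> \<subseteq> Tp"
  proof
    fix \<zeta> assume "\<zeta> \<in> ball t \<rho>"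
    then have d: "cmod (t - \<zeta>) < \<rho>" by (simp add: dist_norm)
    have "\<bar>Im t - Im \<zeta>\<bar> \<le> cmod (t - \<zeta>)" using abs_Im_le_cmod[of "t - \<zeta>"] by simp
    then have "Im \<zeta> > 0" using d unfolding \<rho>_def using t by linarith
    moreover have "cmod \<zeta> \<le> cmod t + cmod (t - \<zeta>)" by (metis add.commute diff_add_cancel norm_minus_commute norm_triangle_ineq)
    then have "cmod \<zeta> < 1" using d \<rho> t by linarith
    ultimately show "\<zeta> \<in> Tp" unfolding Tp_def by simp
  qed
  have bnd: "Im (F \<zeta>) \<le> B" and nonneg: "0 \<le> Im (F \<zeta>)" if "\<zeta> \<in> ball t \<rho>" for \<zeta>
  proof -
    have zT: "\<zeta> \<in> Tp" using ballT that by blast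
    show "0 \<le> Im (F \<zeta>)" using F_Im(1)[OF zT] .
    have d: "cmod (t - \<zeta>) < \<rho>" using that by (simp add: dist_norm)
    have "\<bar>Im t - Im \<zeta>\<bar> \<le> cmod (t - \<zeta>)" using abs_Im_le_cmod[of "t - \<zeta>"] by simp
    then have Iz: "Im \<zeta> \<le> 3/2 * Im t" using d unfolding \<rho>_def by linarith
    have "\<rho> \<le> cmod t / 2" unfolding \<rho>_def using abs_Im_le_cmod[of t] by simp
    moreover have "cmod t \<le> cmod \<zeta> + cmod (t - \<zeta>)" by (metis add.commute diff_add_cancel norm_triangle_ineq)
    ultimately have za: "cmod \<zeta> \<ge> a / 2" using d t by linarith
    have "Im (F \<zeta>) \<le> r^2 * Im \<zeta> / (cmod \<zeta>)^2" using F_Im(2)[OF zT] .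
    also have "\<dots> \<le> 1 * (3/2 * Im t) / (a/2)^2"
    proof (intro frac_le mult_mono)
      show "r^2 \<le> 1" using rpos rlt by (simp add: power_le_one)
      show "Im \<zeta> \<le> 3/2 * Im t" by fact
      show "(a/2)^2 \<le> (cmod \<zeta>)^2" using za \<open>a > 0\<close> by (intro power_mono) auto
    qed (use zT \<open>a > 0\<close> t in \<open>auto simp: Tp_def\<close>)
    also have "\<dots> = B" unfolding B_def by (simp add: power2_eq_square field_simps)
    finally show "Im (F \<zeta>) \<le> B" .
  qed
  have tb: "t \<in> ball t \<rho>" using \<rho> by simp
  have "cmod (deriv F t) \<le> 4 * B / \<rho>"
  proof (rule deriv_bound_Im)
    show "F holomorphic_on ball t \<rho>" using hol_F ballT by (rule holomorphic_on_subset)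
    show "\<rho> > 0" "B > 0" using \<rho> B by auto
    fix \<zeta> assume "\<zeta> \<in> ball t \<rho>"
    then have "0 \<le> Im (F \<zeta>)" "Im (F \<zeta>) \<le> B" "0 \<le> Im (F t)" "Im (F t) \<le> B" using bnd nonneg tb by auto
    then show "\<bar>Im (F \<zeta>) - Im (F t)\<bar> \<le> B" by (simp add: abs_le_iff)
  qed
  also have "4 * B / \<rho> = 48 / a^2" unfolding B_def \<rho>_def using t by (simp add: field_simps)
  finally show ?thesis .
qed

lemma piece:
  assumes "a > 0" "-(22/25) \<le> \<alpha>" "\<beta> \<le> (22/25)" and aab: "\<And>x. \<alpha> < x \<Longrightarrow> x < \<beta> \<Longrightarrow> a \<le> \<bar>x\<bar>"
  defines "S \<equiv> {t. \<alpha> < Re t \<and> Re t < \<beta> \<and> \<bar>Im t\<bar> < (2/25)}"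
  shows "\<exists>\<Phi>. \<Phi> holomorphic_on S \<and> (\<forall>t\<in>S. 0 < Im t \<longrightarrow> \<Phi> t = F t) \<and>
     (\<forall>t\<in>S. Im t < 0 \<longrightarrow> \<Phi> t = cnj (F (cnj t))) \<and> (\<forall>t\<in>S. Im t = 0 \<longrightarrow> Im (\<Phi> t) = 0)"
proof -
  define Rp where "Rp = {t. \<alpha> < Re t \<and> Re t < \<beta> \<and> 0 < Im t \<and> Im t < (2/25)}"
  have Rp_props: "0 < Im t" "Im t < (2/25)" "cmod t < (24/25)" "a \<le> cmod t" if "t \<in> Rp" for t
  proof -
    have r: "\<alpha> < Re t" "Re t < \<beta>" "0 < Im t" "Im t < (2/25)" using that unfolding Rp_def by auto
    show "0 < Im t" "Im t < (2/25)" using r by auto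
    have "cmod t \<le> \<bar>Re t\<bar> + \<bar>Im t\<bar>" by (rule cmod_le)
    then show "cmod t < (24/25)" using r assms by linarith
    show "a \<le> cmod t" using aab[OF r(1,2)] abs_Re_le_cmod[of t] by linarith
  qed
  have RpT: "Rp \<subseteq> Tp" using Rp_props unfolding Tp_def by fastforce
  have convRp: "convex Rp"
  proof -
    have eq: "Rp = {t. \<alpha> < Re t} \<inter> {t. Re t < \<beta>} \<inter> {t. 0 < Im t} \<inter> {t. Im t < (2/25)}" unfolding Rp_def by auto
    show ?thesis unfolding eq by (intro convex_Int convex_halfspace_Re_gt convex_halfspace_Re_lt convex_halfspace_Im_gt convex_halfspace_Im_lt)
  qed
  have openRp: "open Rp"
  proof -
    have eq: "Rp = {t. \<alpha> < Re t} \<inter> {t. Re t < \<beta>} \<inter> {t. 0 < Im t} \<inter> {t. Im t < (2/25)}" unfolding Rp_def by auto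
    show ?thesis unfolding eq by (intro open_Int open_halfspace_Re_gt open_halfspace_Re_lt open_halfspace_Im_gt open_halfspace_Im_lt)
  qed
  have lip: "cmod (F x - F y) \<le> 48 / a^2 * cmod (x - y)" if "x \<in> Rp" "y \<in> Rp" for x y
  proof (rule field_differentiable_bound[OF convRp, where f' = "deriv F"])
    fix z assume zR: "z \<in> Rp"
    have "(F has_field_derivative deriv F z) (at z)"
      using hol_F open_Tp RpT zR by (intro holomorphic_derivI[of F Tp]) auto
    then show "(F has_field_derivative deriv F z) (at z within Rp)" by (rule has_field_derivative_at_within)
    show "cmod (deriv F z) \<le> 48 / a^2" using F_deriv_bound[OF \<open>a > 0\<close> Rp_props[OF zR]] .
  qed (use that in auto)
  have uc: "uniformly_continuous_on Rp F" by (rule lipschitz_uc[OF lip]) auto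
  obtain G where G: "uniformly_continuous_on (closure Rp) G" "\<And>x. x \<in> Rp \<Longrightarrow> F x = G x"
  proof -
    from uniformly_continuous_on_extension_on_closure[OF uc]
    obtain G where "uniformly_continuous_on (closure Rp) G" "\<And>x. x \<in> Rp \<Longrightarrow> F x = G x" by metis
    then show ?thesis using that by blast
  qed
  have contG: "continuous_on (closure Rp) G" using G(1) uniformly_continuous_imp_continuous by blast
  have SI: "S \<inter> {z. 0 < Im z} = Rp" unfolding S_def Rp_def by auto
  have SC: "S \<inter> {z. 0 \<le> Im z} \<subseteq> closure Rp"
  proof
    fix x assume xS: "x \<in> S \<inter> {z. 0 \<le> Im z}"
    show "x \<in> closure Rp"
    proof (cases "Im x = 0")
      case False then show ?thesis using xS SI closure_subset by fastforce
    next
      case True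
      have "(\<lambda>n. x + \<i> * of_real ((1/25) * inverse (real (Suc n)))) \<longlonglongrightarrow> x + \<i> * of_real ((1/25) * 0)"
        by (intro tendsto_intros LIMSEQ_inverse_real_of_nat)
      moreover have "x + \<i> * of_real ((1/25) * inverse (real (Suc n))) \<in> Rp" for n
      proof -
        have mem: "\<And>c. 0 < c \<Longrightarrow> c < 2/25 \<Longrightarrow> x + \<i> * of_real c \<in> Rp"
          using xS True unfolding S_def Rp_def by auto
        have "inverse (real (Suc n)) \<le> 1" by (simp add: inverse_le_1_iff)
        moreover have "inverse (real (Suc n)) > 0" by simp
        ultimately show ?thesis by (intro mem) auto
      qed
      ultimately show ?thesis unfolding closure_sequential by (intro exI[of _ "\<lambda>n. x + \<i> * of_real ((1/25) * inverse (real (Suc n)))"]) simp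
    qed
  qed
  have Greal: "Im (G x) = 0" if xS: "x \<in> S" and x0: "Im x = 0" for x
  proof -
    have xcl: "x \<in> closure Rp" using SC xS x0 by auto
    have key: "\<bar>Im (G x)\<bar> \<le> 2 * e" if e: "e > 0" for e
    proof -
      obtain d where d: "d > 0" "\<forall>y\<in>closure Rp. dist y x < d \<longrightarrow> dist (G y) (G x) < e"
        using contG xcl e unfolding continuous_on_iff by blast
      define s where "s = min (d/2) (min (1/25) (e * a^2))"
      have s: "s > 0" "s < d" "s < (2/25)" "s \<le> e * a^2" unfolding s_def using d e \<open>a > 0\<close> by auto
      define y where "y = x + \<i> * of_real s"
      have yR: "y \<in> Rp" using xS x0 s unfolding y_def S_def Rp_def by auto
      have dy: "dist y x < d" unfolding y_def using s by (simp add: dist_norm norm_mult)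
      have "y \<in> closure Rp" using yR closure_subset by blast
      then have Gy: "cmod (G y - G x) < e" using d(2) dy by (auto simp: dist_norm)
      have "\<bar>Im (G y) - Im (G x)\<bar> < e" using Gy abs_Im_le_cmod[of "G y - G x"] by simp
      moreover have "0 \<le> Im (G y)" using F_Im(1)[of y] RpT yR G(2)[OF yR] by auto
      moreover have "Im (G y) \<le> e"
      proof -
        have yT: "y \<in> Tp" using RpT yR by blast
        have "Im (G y) \<le> r^2 * Im y / (cmod y)^2" using F_Im(2)[OF yT] G(2)[OF yR] by simp
        also have "\<dots> \<le> 1 * s / a^2"
        proof (intro frac_le mult_mono)
          show "r^2 \<le> 1" using rpos rlt by (simp add: power_le_one)
          show "Im y \<le> s" unfolding y_def using x0 by simp
          show "a^2 \<le> (cmod y)^2" using Rp_props(4)[OF yR] \<open>a > 0\<close> by (intro power_mono) auto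
        qed (use s \<open>a > 0\<close> yR Rp_props(1)[OF yR] in auto)
        also have "\<dots> \<le> e" using s \<open>a > 0\<close> by (simp add: divide_le_eq)
        finally show ?thesis .
      qed
      ultimately show ?thesis by linarith
    qed
    have "\<bar>Im (G x)\<bar> \<le> 0 + e" if "e > 0" for e using key[of "e/2"] that by simp
    then have "\<bar>Im (G x)\<bar> \<le> 0" by (rule field_le_epsilon)
    then show ?thesis by simp
  qed
  define \<Phi> where "\<Phi> = (\<lambda>z. if 0 \<le> Im z then G z else cnj (G (cnj z)))"
  have openS: "open S"
  proof -
    have eq: "S = {t. \<alpha> < Re t} \<inter> {t. Re t < \<beta>} \<inter> {t. Im t < (2/25)} \<inter> {t. -(2/25) < Im t}" unfolding S_def by auto
    show ?thesis unfolding eq by (intro open_Int open_halfspace_Re_gt open_halfspace_Re_lt open_halfspace_Im_gt open_halfspace_Im_lt)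
  qed
  have holPhi: "\<Phi> holomorphic_on S" unfolding \<Phi>_def
  proof (rule Schwarz_reflection[OF openS])
    show "cnj ` S \<subseteq> S" unfolding S_def by auto
    have "G holomorphic_on Rp"
      using holomorphic_on_subset[OF hol_F RpT] by (rule holomorphic_transform) (use G(2) in auto)
    then show "G holomorphic_on S \<inter> {z. 0 < Im z}" using SI by simp
    show "continuous_on (S \<inter> {z. 0 \<le> Im z}) G" using contG SC by (rule continuous_on_subset)
    fix z assume "z \<in> S" "z \<in> \<real>"
    then show "G z \<in> \<real>" using Greal by (simp add: complex_is_Real_iff)
  qed
  show ?thesis
  proof (intro exI[of _ \<Phi>] conjI ballI impI holPhi)
    fix t assume "t \<in> S" "0 < Im t"
    then show "\<Phi> t = F t" unfolding \<Phi>_def using G(2) SI by auto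
  next
    fix t assume "t \<in> S" "Im t < 0"
    then have "cnj t \<in> Rp" unfolding S_def Rp_def by auto
    then show "\<Phi> t = cnj (F (cnj t))" unfolding \<Phi>_def using G(2) \<open>Im t < 0\<close> by auto
  next
    fix t assume "t \<in> S" "Im t = 0"
    then show "Im (\<Phi> t) = 0" unfolding \<Phi>_def using Greal by auto
  qed
qed

end

lemma seq_above: "(\<lambda>n. t + \<i> * of_real (\<epsilon>/2 * inverse (real (Suc n)))) \<longlonglongrightarrow> t"
proof -
  have "(\<lambda>n. t + \<i> * of_real (\<epsilon>/2 * inverse (real (Suc n)))) \<longlonglongrightarrow> t + \<i> * of_real (\<epsilon>/2 * 0)"
    by (intro tendsto_intros LIMSEQ_inverse_real_of_nat)
  then show ?thesis by simp
qed

lemma seq_above_in: assumes "\<epsilon> > 0" shows "0 < \<epsilon>/2 * inverse (real (Suc n))" "\<epsilon>/2 * inverse (real (Suc n)) < \<epsilon>"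
proof -
  have "inverse (real (Suc n)) \<le> 1" by (simp add: inverse_le_1_iff)
  moreover have "inverse (real (Suc n)) > 0" by simp
  ultimately show "0 < \<epsilon>/2 * inverse (real (Suc n))" "\<epsilon>/2 * inverse (real (Suc n)) < \<epsilon>"
    using assms by (auto intro: mult_pos_pos)
qed

lemma eq_from_above:
  assumes c1: "isCont \<Phi>1 t" and c2: "isCont \<Phi>2 t" and "\<epsilon> > 0"
    and eq: "\<And>s. 0 < s \<Longrightarrow> s < \<epsilon> \<Longrightarrow> \<Phi>1 (t + \<i> * of_real s) = \<Phi>2 (t + \<i> * of_real s)"
  shows "\<Phi>1 t = (\<Phi>2 t :: complex)"
proof -
  let ?\<sigma> = "\<lambda>n. t + \<i> * of_real (\<epsilon>/2 * inverse (real (Suc n)))"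
  have "(\<lambda>n. \<Phi>1 (?\<sigma> n)) \<longlonglongrightarrow> \<Phi>1 t" using isCont_tendsto_compose[OF c1 seq_above] .
  moreover have "(\<lambda>n. \<Phi>1 (?\<sigma> n)) = (\<lambda>n. \<Phi>2 (?\<sigma> n))"
    using eq[OF seq_above_in[OF \<open>\<epsilon> > 0\<close>]] by blast
  moreover have "(\<lambda>n. \<Phi>2 (?\<sigma> n)) \<longlonglongrightarrow> \<Phi>2 t" using isCont_tendsto_compose[OF c2 seq_above] .
  ultimately show ?thesis using LIMSEQ_unique by metis
qed

lemma le_from_above:
  assumes c1: "isCont \<Phi> t" and c2: "isCont B t" and "\<epsilon> > 0"
    and le: "\<And>s. 0 < s \<Longrightarrow> s < \<epsilon> \<Longrightarrow> cmod (\<Phi> (t + \<i> * of_real s)) \<le> B (t + \<i> * of_real s)"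
  shows "cmod (\<Phi> t) \<le> (B t :: real)"
proof -
  let ?\<sigma> = "\<lambda>n. t + \<i> * of_real (\<epsilon>/2 * inverse (real (Suc n)))"
  have "(\<lambda>n. cmod (\<Phi> (?\<sigma> n))) \<longlonglongrightarrow> cmod (\<Phi> t)" using tendsto_norm[OF isCont_tendsto_compose[OF c1 seq_above]] .
  moreover have "(\<lambda>n. B (?\<sigma> n)) \<longlonglongrightarrow> B t" using isCont_tendsto_compose[OF c2 seq_above] .
  moreover have "\<forall>n. cmod (\<Phi> (?\<sigma> n)) \<le> B (?\<sigma> n)"
    using le[OF seq_above_in[OF \<open>\<epsilon> > 0\<close>]] by blast
  ultimately show ?thesis by (intro LIMSEQ_le) auto
qed

lemma quad_deriv:
  assumes "d0 > 0" and b: "\<And>t. cmod t < d0 \<Longrightarrow> cmod (\<Phi> t - c * t) \<le> C * (cmod t)^2" and "\<Phi> 0 = 0"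
  shows "(\<Phi> has_field_derivative c) (at (0::complex))"
  unfolding has_field_derivative_iff
proof (rule tendstoI)
  fix e :: real assume e: "e > 0"
  show "\<forall>\<^sub>F y in at 0. dist ((\<Phi> y - \<Phi> 0) / (y - 0)) c < e"
    unfolding eventually_at
  proof (intro exI[of _ "min d0 (e / (\<bar>C\<bar> + 1))"] conjI ballI impI)
    show "0 < min d0 (e / (\<bar>C\<bar> + 1))" using e \<open>d0 > 0\<close> by simp
    fix y :: complex assume y: "y \<noteq> 0 \<and> dist y 0 < min d0 (e / (\<bar>C\<bar> + 1))"
    then have y0: "y \<noteq> 0" and yd: "cmod y < d0" and ye: "cmod y < e / (\<bar>C\<bar> + 1)" by auto
    have "(\<Phi> y - \<Phi> 0) / (y - 0) - c = (\<Phi> y - c * y) / y" using y0 \<open>\<Phi> 0 = 0\<close> by (simp add: field_simps)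
    then have "dist ((\<Phi> y - \<Phi> 0) / (y - 0)) c = cmod (\<Phi> y - c * y) / cmod y" by (simp add: dist_norm norm_divide)
    also have "\<dots> \<le> C * (cmod y)^2 / cmod y" using b[OF yd] y0 by (simp add: divide_right_mono)
    also have "\<dots> = C * cmod y" using y0 by (simp add: power2_eq_square)
    also have "\<dots> \<le> \<bar>C\<bar> * cmod y" by (simp add: mult_right_mono)
    also have "\<dots> < e"
    proof -
      have "\<bar>C\<bar> * cmod y \<le> (\<bar>C\<bar> + 1) * cmod y" by (simp add: mult_right_mono)
      also have "\<dots> < e" using ye by (simp add: field_simps)
      finally show ?thesis .
    qed
    finally show "dist ((\<Phi> y - \<Phi> 0) / (y - 0)) c < e" .
  qed
qed

context conf_setup begin

definition Sr :: "real \<Rightarrow> complex set" where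
  "Sr x = {t. (if 0 < x then x/2 else -(22/25)) < Re t \<and> Re t < (if 0 < x then 22/25 else x/2) \<and> \<bar>Im t\<bar> < 2/25}"

definition PhiP where "PhiP x \<Phi> \<longleftrightarrow> \<Phi> holomorphic_on Sr x \<and> (\<forall>t\<in>Sr x. 0 < Im t \<longrightarrow> \<Phi> t = F t) \<and>
     (\<forall>t\<in>Sr x. Im t < 0 \<longrightarrow> \<Phi> t = cnj (F (cnj t))) \<and> (\<forall>t\<in>Sr x. Im t = 0 \<longrightarrow> Im (\<Phi> t) = 0)"

definition Phi where "Phi x = (SOME \<Phi>. PhiP x \<Phi>)"

lemma open_Sr: "open (Sr x)"
proof -
  have eq: "Sr x = {t. (if 0 < x then x/2 else -(22/25)) < Re t} \<inter> {t. Re t < (if 0 < x then 22/25 else x/2)} \<inter> {t. Im t < 2/25} \<inter> {t. -(2/25) < Im t}"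
    unfolding Sr_def by auto
  show ?thesis unfolding eq by (intro open_Int open_halfspace_Re_gt open_halfspace_Re_lt open_halfspace_Im_gt open_halfspace_Im_lt)
qed

lemma Phi: assumes "x \<noteq> 0" shows "PhiP x (Phi x)"
proof -
  have "\<exists>\<Phi>. PhiP x \<Phi>"
    unfolding PhiP_def Sr_def
  proof (rule piece[of "\<bar>x\<bar>/2"])
    show "0 < \<bar>x\<bar>/2" using assms by simp
    show "-(22/25) \<le> (if 0 < x then x/2 else -(22/25))" by auto
    show "(if 0 < x then 22/25 else x/2) \<le> 22/25" by auto
    fix y assume "(if 0 < x then x/2 else -(22/25)) < y" "y < (if 0 < x then 22/25 else x/2)"
    then show "\<bar>x\<bar>/2 \<le> \<bar>y\<bar>" using assms by (auto split: if_splits)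
  qed
  then show ?thesis unfolding Phi_def by (rule someI_ex)
qed

definition Fh where "Fh t = (if 0 < Im t then F t else if Im t < 0 then cnj (F (cnj t)) else if Re t = 0 then 0 else Phi (Re t) t)"

lemma Fh0: "Fh 0 = 0" unfolding Fh_def by simp

lemma isCont_Phi: assumes "x \<noteq> 0" "t \<in> Sr x" shows "isCont (Phi x) t"
proof -
  have "continuous_on (Sr x) (Phi x)" using Phi[OF assms(1)] unfolding PhiP_def
    by (simp add: holomorphic_on_imp_continuous_on)
  then show ?thesis using open_Sr assms(2) continuous_on_eq_continuous_at by blast
qed

lemma Fh_Sr: assumes x: "x \<noteq> 0" and t: "t \<in> Sr x" shows "Fh t = Phi x t"
proof -
  have P: "PhiP x (Phi x)" by (rule Phi[OF x])
  consider "0 < Im t" | "Im t < 0" | "Im t = 0" by linarith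
  then show ?thesis
  proof cases
    case 1 then show ?thesis using P t unfolding PhiP_def Fh_def by auto
  next
    case 2 then show ?thesis using P t unfolding PhiP_def Fh_def by auto
  next
    case 3
    have rt: "Re t \<noteq> 0" and tr: "t \<in> Sr (Re t)" using t x unfolding Sr_def by (auto split: if_splits)
    have P2: "PhiP (Re t) (Phi (Re t))" by (rule Phi[OF rt])
    have "Phi (Re t) t = Phi x t"
    proof (rule eq_from_above[OF isCont_Phi[OF rt tr] isCont_Phi[OF x t]])
      show "(2/25::real) > 0" by simp
      fix s :: real assume s: "0 < s" "s < 2/25"
      have m1: "t + \<i> * of_real s \<in> Sr x" and m2: "t + \<i> * of_real s \<in> Sr (Re t)"
        using t tr s 3 unfolding Sr_def by auto
      have ip: "0 < Im (t + \<i> * of_real s)" using 3 s by simp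
      have "Phi (Re t) (t + \<i> * of_real s) = F (t + \<i> * of_real s)" using P2 m2 ip unfolding PhiP_def by blast
      moreover have "Phi x (t + \<i> * of_real s) = F (t + \<i> * of_real s)" using P m1 ip unfolding PhiP_def by blast
      ultimately show "Phi (Re t) (t + \<i> * of_real s) = Phi x (t + \<i> * of_real s)" by simp
    qed
    then show ?thesis unfolding Fh_def using 3 rt by simp
  qed
qed

end

context conf_setup begin

definition Tm where "Tm = {t. Im t < 0 \<and> cmod t < 1}"

lemma cnj_Tm: "cnj ` Tm = Tp"
proof
  show "cnj ` Tm \<subseteq> Tp" unfolding Tm_def Tp_def by auto
  show "Tp \<subseteq> cnj ` Tm"
  proof
    fix t assume "t \<in> Tp"
    then have "cnj t \<in> Tm" unfolding Tm_def Tp_def by auto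
    then show "t \<in> cnj ` Tm" by (metis complex_cnj_cnj image_eqI)
  qed
qed

lemma open_Tm: "open Tm"
proof -
  have eq: "Tm = {t. Im t < 0} \<inter> ball 0 1" unfolding Tm_def by auto
  show ?thesis unfolding eq by (intro open_Int open_halfspace_Im_lt open_ball)
qed

lemma Fh_diff: assumes "cmod z < 22/25" "z \<noteq> 0" shows "\<exists>f'. (Fh has_field_derivative f') (at z)"
proof -
  consider "0 < Im z" | "Im z < 0" | "Im z = 0" by linarith
  then show ?thesis
  proof cases
    case 1
    then have zT: "z \<in> Tp" using assms unfolding Tp_def by auto
    have "(F has_field_derivative deriv F z) (at z)" using hol_F open_Tp zT by (intro holomorphic_derivI[of F Tp]) auto
    then have "(Fh has_field_derivative deriv F z) (at z)"
      by (rule has_field_derivative_transform_within_open[OF _ open_Tp zT]) (auto simp: Fh_def Tp_def)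
    then show ?thesis by blast
  next
    case 2
    then have zT: "z \<in> Tm" using assms unfolding Tm_def by auto
    have hol: "(cnj \<circ> F \<circ> cnj) holomorphic_on Tm"
      by (rule holomorphic_on_compose_cnj_cnj) (use hol_F cnj_Tm open_Tm in auto)
    have "((cnj \<circ> F \<circ> cnj) has_field_derivative deriv (cnj \<circ> F \<circ> cnj) z) (at z)"
      using hol open_Tm zT by (intro holomorphic_derivI[of _ Tm]) auto
    then have "(Fh has_field_derivative deriv (cnj \<circ> F \<circ> cnj) z) (at z)"
      by (rule has_field_derivative_transform_within_open[OF _ open_Tm zT]) (auto simp: Fh_def Tm_def)
    then show ?thesis by blast
  next
    case 3
    define x where "x = Re z"
    have x0: "x \<noteq> 0" using assms 3 unfolding x_def by (simp add: complex_eq_iff)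
    have "\<bar>x\<bar> < 22/25" using abs_Re_le_cmod[of z] assms unfolding x_def by linarith
    then have zS: "z \<in> Sr x" using 3 x0 unfolding Sr_def x_def by auto
    have "(Phi x has_field_derivative deriv (Phi x) z) (at z)"
      using Phi[OF x0] open_Sr zS unfolding PhiP_def by (intro holomorphic_derivI[of _ "Sr x"]) auto
    then have "(Fh has_field_derivative deriv (Phi x) z) (at z)"
      by (rule has_field_derivative_transform_within_open[OF _ open_Sr zS]) (use Fh_Sr[OF x0] in auto)
    then show ?thesis by blast
  qed
qed

lemma isCont_Fh: assumes "cmod z < 22/25" "z \<noteq> 0" shows "isCont Fh z"
  using Fh_diff[OF assms] DERIV_isCont by blast

lemma Fh_quad: "\<exists>C3 d1. d1 > 0 \<and> (\<forall>t. cmod t < d1 \<longrightarrow> cmod (Fh t - of_real h * t) \<le> C3 * (cmod t)^2)"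
proof -
  obtain C3 d0 where d0: "d0 > 0" and b: "\<forall>t\<in>Tp. cmod t < d0 \<longrightarrow> cmod (F t - of_real h * t) \<le> C3 * (cmod t)^2"
    using F_near0 by blast
  define d1 where "d1 = min d0 (22/25)"
  have d1: "d1 > 0" "d1 \<le> d0" "d1 \<le> 22/25" unfolding d1_def using d0 by auto
  have up: "cmod (Fh t - of_real h * t) \<le> C3 * (cmod t)^2" if "0 < Im t" "cmod t < d1" for t
  proof -
    have "t \<in> Tp" using that d1 unfolding Tp_def by auto
    then show ?thesis using b that d1 unfolding Fh_def by auto
  qed
  have "cmod (Fh t - of_real h * t) \<le> C3 * (cmod t)^2" if t: "cmod t < d1" for t
  proof -
    consider "0 < Im t" | "Im t < 0" | "Im t = 0" by linarith
    then show ?thesis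
    proof cases
      case 1 then show ?thesis using up t by blast
    next
      case 2
      have cT: "cnj t \<in> Tp" using 2 t d1 unfolding Tp_def by auto
      have "Fh t - of_real h * t = cnj (F (cnj t) - of_real h * cnj t)" using 2 unfolding Fh_def by simp
      then have "cmod (Fh t - of_real h * t) = cmod (F (cnj t) - of_real h * cnj t)" by (metis complex_mod_cnj)
      also have "\<dots> \<le> C3 * (cmod (cnj t))^2" using b cT t d1 by auto
      finally show ?thesis by simp
    next
      case 3
      show ?thesis
      proof (cases "t = 0")
        case True then show ?thesis by (simp add: Fh0)
      next
        case False
        show ?thesis
        proof (rule le_from_above[where \<Phi> = "\<lambda>u. Fh u - of_real h * u" and B = "\<lambda>u. C3 * (cmod u)^2" and \<epsilon> = "d1 - cmod t"])
          show "isCont (\<lambda>u. Fh u - of_real h * u) t"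
            using isCont_Fh[OF _ False] t d1 by (intro continuous_intros) auto
          show "isCont (\<lambda>u. C3 * (cmod u)^2) t" by (intro continuous_intros)
          show "0 < d1 - cmod t" using t by simp
          fix s :: real assume s: "0 < s" "s < d1 - cmod t"
          have "cmod (t + \<i> * of_real s) \<le> cmod t + cmod (\<i> * of_real s)" by (rule norm_triangle_ineq)
          then have "cmod (t + \<i> * of_real s) < d1" using s by (simp add: norm_mult)
          moreover have "0 < Im (t + \<i> * of_real s)" using 3 s by simp
          ultimately show "cmod (Fh (t + \<i> * of_real s) - of_real h * (t + \<i> * of_real s)) \<le> C3 * (cmod (t + \<i> * of_real s))^2"
            using up by blast
        qed
      qed
    qed
  qed
  then show ?thesis using d1 by blast
qed

lemma Fh_deriv0: "(Fh has_field_derivative of_real h) (at 0)"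
proof -
  obtain C3 d1 where "d1 > 0" "\<forall>t. cmod t < d1 \<longrightarrow> cmod (Fh t - of_real h * t) \<le> C3 * (cmod t)^2"
    using Fh_quad by blast
  then show ?thesis by (intro quad_deriv[of d1 Fh "of_real h" C3]) (auto simp: Fh0)
qed

lemma Fh_hol: "Fh holomorphic_on ball 0 (22/25)"
proof -
  have "\<exists>f'. (Fh has_field_derivative f') (at z)" if "z \<in> ball 0 (22/25)" for z
  proof (cases "z = 0")
    case True then show ?thesis using Fh_deriv0 by blast
  next
    case False then show ?thesis using Fh_diff that by simp
  qed
  then show ?thesis by (simp add: holomorphic_on_open)
qed

lemma Fh_sign: assumes "cmod t < 22/25"
  shows "0 \<le> Im t \<Longrightarrow> 0 \<le> Im (Fh t)" "Im t \<le> 0 \<Longrightarrow> Im (Fh t) \<le> 0"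
proof -
  have real: "Im (Fh t) = 0" if "Im t = 0"
  proof (cases "Re t = 0")
    case True then show ?thesis using that unfolding Fh_def by simp
  next
    case False
    have "\<bar>Re t\<bar> < 22/25" using abs_Re_le_cmod[of t] assms by linarith
    then have tS: "t \<in> Sr (Re t)" using that False unfolding Sr_def by auto
    have "Im (Phi (Re t) t) = 0" using Phi[OF False] tS that unfolding PhiP_def by blast
    then show ?thesis unfolding Fh_def using that False by simp
  qed
  have tT: "0 < Im t \<Longrightarrow> t \<in> Tp" using assms unfolding Tp_def by auto
  have cT: "Im t < 0 \<Longrightarrow> cnj t \<in> Tp" using assms unfolding Tp_def by auto
  show "0 \<le> Im t \<Longrightarrow> 0 \<le> Im (Fh t)"
    using real F_Im(1)[OF tT] unfolding Fh_def by (cases "Im t = 0") auto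
  show "Im t \<le> 0 \<Longrightarrow> Im (Fh t) \<le> 0"
    using real F_Im(1)[OF cT] unfolding Fh_def by (cases "Im t = 0") auto
qed

end

lemma unit_circle_factor: assumes "cmod \<tau> = 1"
  shows "Re ((1 - \<tau>^2) * P / \<tau>) = 2 * Im \<tau> * Im P"
proof -
  have t0: "\<tau> \<noteq> 0" using assms by auto
  have "\<tau> * cnj \<tau> = of_real ((cmod \<tau>)^2)" by (simp add: complex_mult_cnj cmod_power2)
  then have tc: "\<tau> * cnj \<tau> = 1" using assms by simp
  have "(1 - \<tau>^2) / \<tau> = cnj \<tau> - \<tau>"
    using t0 tc by (simp add: field_simps power2_eq_square)
  then have "(1 - \<tau>^2) * P / \<tau> = (cnj \<tau> - \<tau>) * P" by (metis times_divide_eq_left)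
  then show ?thesis by simp
qed

lemma typ_real:
  fixes P :: "complex \<Rightarrow> complex" and h :: real
  assumes hol: "P holomorphic_on ball 0 R1" and R1: "R1 > 1" and P0: "P 0 = 0"
    and dP: "(P has_field_derivative of_real h) (at 0)"
    and sgn1: "\<And>\<tau>. \<tau> \<in> ball 0 R1 \<Longrightarrow> 0 \<le> Im \<tau> \<Longrightarrow> 0 \<le> Im (P \<tau>)"
    and sgn2: "\<And>\<tau>. \<tau> \<in> ball 0 R1 \<Longrightarrow> Im \<tau> \<le> 0 \<Longrightarrow> Im (P \<tau>) \<le> 0"
  shows "0 \<le> h" and "\<And>\<tau>. cmod \<tau> < 1 \<Longrightarrow> \<tau> \<noteq> 0 \<Longrightarrow>
      (1 - cmod \<tau>) * cmod ((1 - \<tau>^2) * P \<tau> / \<tau> - of_real h) \<le> 2 * h * cmod \<tau>"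
proof -
  define Q where "Q \<tau> = (if \<tau> = 0 then of_real h else P \<tau> / \<tau>)" for \<tau>
  have limQ: "(Q \<longlongrightarrow> Q 0) (at 0)"
  proof -
    have "((\<lambda>y. (P y - P 0) / (y - 0)) \<longlongrightarrow> of_real h) (at 0)"
      using dP unfolding has_field_derivative_iff .
    then have "((\<lambda>y. P y / y) \<longlongrightarrow> of_real h) (at 0)" using P0 by simp
    moreover have "\<forall>\<^sub>F y in at 0. P y / y = Q y" unfolding eventually_at Q_def
      by (intro exI[of _ 1]) auto
    ultimately show ?thesis unfolding Q_def using tendsto_cong by fastforce
  qed
  have holQ: "Q holomorphic_on ball 0 R1"
  proof (rule no_isolated_singularity'[where K = "{0}"])
    show "(Q \<longlongrightarrow> Q z) (at z within ball 0 R1)" if "z \<in> {0}" for z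
      using that limQ tendsto_within_subset by fastforce
    have "(\<lambda>\<tau>. P \<tau> / \<tau>) holomorphic_on ball 0 R1 - {0}"
      using hol by (intro holomorphic_intros) (auto intro: holomorphic_on_subset)
    then show "Q holomorphic_on ball 0 R1 - {0}"
      by (rule holomorphic_transform) (auto simp: Q_def)
  qed auto
  define p where "p \<tau> = (1 - \<tau>^2) * Q \<tau>" for \<tau>
  have holp: "p holomorphic_on ball 0 R1" unfolding p_def by (intro holomorphic_intros holQ)
  have p0: "p 0 = of_real h" unfolding p_def Q_def by simp
  have pt: "p \<tau> = (1 - \<tau>^2) * P \<tau> / \<tau>" if "\<tau> \<noteq> 0" for \<tau> unfolding p_def Q_def using that by simp
  have cb: "cball 0 1 \<subseteq> ball (0::complex) R1" using R1 by auto
  have bb: "ball 0 1 \<subseteq> ball (0::complex) R1" using R1 by auto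
  have Rep: "0 \<le> Re (p \<xi>)" if "\<xi> \<in> cball 0 1" for \<xi>
  proof -
    have "Re ((\<lambda>\<tau>. - p \<tau>) \<xi>) \<le> 0"
    proof (rule maximum_real_frontier[where S = "cball 0 1" and f = "\<lambda>\<tau>. - p \<tau>"])
      have "ball 0 1 \<subseteq> ball (0::complex) R1" using R1 by auto
      then show "(\<lambda>\<tau>. - p \<tau>) holomorphic_on interior (cball 0 1)"
        using holp by (intro holomorphic_intros) (auto intro: holomorphic_on_subset)
      show "continuous_on (closure (cball 0 1)) (\<lambda>\<tau>. - p \<tau>)"
        using holp cb by (intro continuous_intros) (auto intro: holomorphic_on_imp_continuous_on holomorphic_on_subset)
      show "bounded (cball (0::complex) 1)" by simp
      show "\<xi> \<in> cball 0 1" by fact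
      fix \<tau> :: complex assume "\<tau> \<in> frontier (cball 0 1)"
      then have n1: "cmod \<tau> = 1" by simp
      then have t0: "\<tau> \<noteq> 0" by auto
      have tb: "\<tau> \<in> ball 0 R1" using n1 R1 by simp
      have "0 \<le> Im \<tau> * Im (P \<tau>)"
      proof (cases "0 \<le> Im \<tau>")
        case True then show ?thesis using sgn1[OF tb] by simp
      next
        case False then show ?thesis using sgn2[OF tb] by (simp add: mult_nonpos_nonpos)
      qed
      then show "Re (- p \<tau>) \<le> 0" using unit_circle_factor[OF n1, of "P \<tau>"] pt[OF t0] by simp
    qed
    then show ?thesis by simp
  qed
  show h0: "0 \<le> h" using Rep[of 0] p0 by simp
  fix \<tau> :: complex assume t1: "cmod \<tau> < 1" and t0: "\<tau> \<noteq> 0"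
  have key: "(1 - cmod \<tau>) * cmod (p \<tau> - of_real h) \<le> 2 * h * cmod \<tau> + 2 * \<epsilon>" if e: "\<epsilon> > 0" for \<epsilon>
  proof -
    define \<omega> where "\<omega> z = (p z - of_real h) / (p z + of_real (h + 2 * \<epsilon>))" for z
    have Re_den: "Re (p z + of_real (h + 2 * \<epsilon>)) \<ge> 2 * \<epsilon>" if "cmod z < 1" for z
      using Rep[of z] that h0 by simp
    have den: "p z + of_real (h + 2 * \<epsilon>) \<noteq> 0" if "cmod z < 1" for z
      using Re_den[OF that] e by (metis less_le_not_le mult_pos_pos zero_complex.simps(1) zero_less_numeral)
    have holw: "\<omega> holomorphic_on ball 0 1"
      unfolding \<omega>_def using holomorphic_on_subset[OF holp bb] den by (intro holomorphic_intros) auto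
    have w0: "\<omega> 0 = 0" unfolding \<omega>_def p0 by simp
    have wlt: "cmod (\<omega> z) < 1" if z: "cmod z < 1" for z
    proof -
      define A where "A = p z + of_real \<epsilon>"
      define c where "c = h + \<epsilon>"
      have c: "c > 0" unfolding c_def using h0 e by simp
      have ReA: "Re A > 0" unfolding A_def using Rep[of z] z e by simp
      have e1: "p z - of_real h = A - of_real c" unfolding A_def c_def by simp
      have e2: "p z + of_real (h + 2 * \<epsilon>) = A + of_real c" unfolding A_def c_def by simp
      have "(cmod (A - of_real c))^2 < (cmod (A + of_real c))^2"
        unfolding cmod_power2 using ReA c by (simp add: power2_eq_square algebra_simps)
      then have "cmod (A - of_real c) < cmod (A + of_real c)" using power_less_imp_less_base by fastforce
      then show ?thesis unfolding \<omega>_def e1 e2 using den[OF z] unfolding e2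
        by (simp add: norm_divide divide_less_eq)
    qed
    have "cmod (\<omega> \<tau>) \<le> cmod \<tau>" by (rule Schwarz_Lemma(1)[OF holw w0 wlt t1])
    then have "cmod (p \<tau> - of_real h) \<le> cmod \<tau> * cmod (p \<tau> + of_real (h + 2 * \<epsilon>))"
      using den[OF t1] unfolding \<omega>_def by (simp add: norm_divide divide_le_eq mult.commute)
    also have "cmod (p \<tau> + of_real (h + 2 * \<epsilon>)) \<le> cmod (p \<tau> - of_real h) + (2 * h + 2 * \<epsilon>)"
    proof -
      have "p \<tau> + of_real (h + 2 * \<epsilon>) = (p \<tau> - of_real h) + of_real (2 * h + 2 * \<epsilon>)" by simp
      then have "cmod (p \<tau> + of_real (h + 2 * \<epsilon>)) \<le> cmod (p \<tau> - of_real h) + cmod (of_real (2 * h + 2 * \<epsilon>) :: complex)"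
        by (metis norm_triangle_ineq)
      moreover have "cmod (of_real (2 * h + 2 * \<epsilon>) :: complex) = 2 * h + 2 * \<epsilon>" using h0 e by (simp only: norm_of_real)
      ultimately show ?thesis by simp
    qed
    then have "cmod \<tau> * cmod (p \<tau> + of_real (h + 2 * \<epsilon>)) \<le> cmod \<tau> * (cmod (p \<tau> - of_real h) + (2 * h + 2 * \<epsilon>))"
      by (simp add: mult_left_mono)
    finally have "cmod (p \<tau> - of_real h) \<le> cmod \<tau> * (cmod (p \<tau> - of_real h) + (2 * h + 2 * \<epsilon>))" .
    then have "(1 - cmod \<tau>) * cmod (p \<tau> - of_real h) \<le> 2 * h * cmod \<tau> + 2 * \<epsilon> * cmod \<tau>"
      by (simp add: algebra_simps)
    also have "2 * \<epsilon> * cmod \<tau> \<le> 2 * \<epsilon>" using t1 e by simp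
    finally show ?thesis by simp
  qed
  have "(1 - cmod \<tau>) * cmod (p \<tau> - of_real h) \<le> 2 * h * cmod \<tau>"
  proof (rule field_le_epsilon)
    fix e :: real assume "e > 0"
    then show "(1 - cmod \<tau>) * cmod (p \<tau> - of_real h) \<le> 2 * h * cmod \<tau> + e"
      using key[of "e/2"] by simp
  qed
  then show "(1 - cmod \<tau>) * cmod ((1 - \<tau>^2) * P \<tau> / \<tau> - of_real h) \<le> 2 * h * cmod \<tau>"
    using pt[OF t0] by simp
qed


context conf_setup begin

definition PP where "PP \<tau> = Fh (of_real (87/100) * \<tau>) / of_real (87/100)"

lemma PP_props:
  shows "PP holomorphic_on ball 0 (88/87)" "PP 0 = 0" "(PP has_field_derivative of_real h) (at 0)"
    "\<And>\<tau>. \<tau> \<in> ball 0 (88/87) \<Longrightarrow> 0 \<le> Im \<tau> \<Longrightarrow> 0 \<le> Im (PP \<tau>)"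
    "\<And>\<tau>. \<tau> \<in> ball 0 (88/87) \<Longrightarrow> Im \<tau> \<le> 0 \<Longrightarrow> Im (PP \<tau>) \<le> 0"
proof -
  have inb: "of_real (87/100) * \<tau> \<in> ball 0 (22/25)" if "\<tau> \<in> ball 0 (88/87)" for \<tau> :: complex
  proof -
    have n: "norm \<tau> < 88/87" using that by (simp add: dist_norm)
    have "norm (of_real (87/100) * \<tau>) = 87/100 * norm \<tau>" by (simp add: norm_mult)
    then show ?thesis using n by (simp add: dist_norm)
  qed
  show "PP holomorphic_on ball 0 (88/87)" unfolding PP_def
    by (intro holomorphic_intros holomorphic_on_compose_gen[OF _ Fh_hol, unfolded o_def]) (auto intro: inb)
  show "PP 0 = 0" unfolding PP_def by (simp add: Fh0)
  have "((\<lambda>\<tau>. of_real (87/100) * \<tau>) has_field_derivative of_real (87/100)) (at 0)"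
    by (auto intro!: derivative_eq_intros)
  from DERIV_chain2[OF _ this, of Fh "of_real h"] Fh_deriv0
  have "((\<lambda>\<tau>. Fh (of_real (87/100) * \<tau>)) has_field_derivative of_real h * of_real (87/100)) (at 0)" by simp
  then have "((\<lambda>\<tau>. Fh (of_real (87/100) * \<tau>) / of_real (87/100)) has_field_derivative of_real h * of_real (87/100) / of_real (87/100)) (at 0)"
    by (rule DERIV_cdivide)
  then show "(PP has_field_derivative of_real h) (at 0)" unfolding PP_def by simp
  fix \<tau> :: complex assume tb: "\<tau> \<in> ball 0 (88/87)"
  have n: "cmod (of_real (87/100) * \<tau>) < 22/25" using inb[OF tb] by simp
  have eIm: "Im (PP \<tau>) = Im (Fh (of_real (87/100) * \<tau>)) * (100/87)" unfolding PP_def by simp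
  show "0 \<le> Im \<tau> \<Longrightarrow> 0 \<le> Im (PP \<tau>)" unfolding eIm using Fh_sign(1)[OF n] by simp
  show "Im \<tau> \<le> 0 \<Longrightarrow> Im (PP \<tau>) \<le> 0" unfolding eIm using Fh_sign(2)[OF n] by (simp add: mult_nonpos_nonneg)
qed

lemmas TR = typ_real[OF PP_props(1) _ PP_props(2,3) PP_props(4) PP_props(5)]

lemma h_nonneg: "0 \<le> h" using TR(1) by simp

lemma h_le: "h \<le> 68 * r^2"
proof -
  define \<tau> :: complex where "\<tau> = \<i> / 4"
  have tn: "cmod \<tau> = 1/4" unfolding \<tau>_def by (simp add: norm_divide)
  define q where "q = (1 - \<tau>^2) * PP \<tau> / \<tau>"
  have qb: "(1 - cmod \<tau>) * cmod (q - of_real h) \<le> 2 * h * cmod \<tau>"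
    unfolding q_def by (rule TR(2)) (use tn in \<open>auto simp: \<tau>_def\<close>)
  then have "cmod (q - of_real h) \<le> 2/3 * h" unfolding tn by simp
  then have "h - Re q \<le> 2/3 * h" using abs_Re_le_cmod[of "q - of_real h"] by simp
  then have Req: "h / 3 \<le> Re q" by simp
  have qe: "q = - (17/4) * \<i> * PP \<tau>" unfolding q_def \<tau>_def by (simp add: field_simps power2_eq_square)
  have "Re q = 17/4 * Im (PP \<tau>)" unfolding qe by simp
  moreover have "Im (PP \<tau>) \<le> r^2 * 4 * (100/87)^2"
  proof -
    define t where "t = of_real (87/100) * \<tau>"
    have tT: "t \<in> Tp" unfolding t_def \<tau>_def Tp_def by (simp add: norm_mult norm_divide)
    have "Im (PP \<tau>) = Im (F t) * (100/87)" unfolding PP_def t_def[symmetric] Fh_def using tT unfolding Tp_def by simp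
    also have "\<dots> \<le> r^2 * Im t / (cmod t)^2 * (100/87)" using F_Im(2)[OF tT] by (rule mult_right_mono) simp
    also have "r^2 * Im t / (cmod t)^2 = r^2 * 4 * (100/87)" unfolding t_def \<tau>_def by (simp add: norm_mult norm_divide power2_eq_square)
    finally show ?thesis by (simp add: power2_eq_square)
  qed
  ultimately have "h / 3 \<le> 17/4 * (r^2 * 4 * (100/87)^2)" using Req by linarith
  then have A: "h \<le> (170000/2523) * r^2" by (simp add: power2_eq_square)
  have "(170000/2523) * r^2 \<le> 68 * r^2" by (rule mult_right_mono) auto
  then show ?thesis using A by linarith
qed

lemma F_quad: assumes tT: "t \<in> Tp" and t45: "cmod t \<le> 4/5"
  shows "cmod (F t - of_real h * t) \<le> 200 * h * (cmod t)^2"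
proof -
  define \<tau> where "\<tau> = t / of_real (87/100)"
  have t0: "t \<noteq> 0" using tT unfolding Tp_def by auto
  have tau0: "\<tau> \<noteq> 0" unfolding \<tau>_def using t0 by simp
  have taun: "cmod \<tau> = cmod t * (100/87)" unfolding \<tau>_def by (simp add: norm_divide)
  have tau1: "cmod \<tau> \<le> 80/87" unfolding taun using t45 by simp
  have ttau: "t = of_real (87/100) * \<tau>" unfolding \<tau>_def by simp
  have PPt: "PP \<tau> = F t / of_real (87/100)" unfolding PP_def ttau[symmetric] Fh_def using tT unfolding Tp_def by simp
  define q where "q = (1 - \<tau>^2) * PP \<tau> / \<tau>"
  have qb: "(1 - cmod \<tau>) * cmod (q - of_real h) \<le> 2 * h * cmod \<tau>"
    unfolding q_def by (rule TR(2)) (use tau1 tau0 in auto)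
  have qh: "cmod (q - of_real h) \<le> 174/7 * h * cmod \<tau>"
  proof -
    have "7/87 * cmod (q - of_real h) \<le> (1 - cmod \<tau>) * cmod (q - of_real h)"
      using tau1 by (intro mult_right_mono) auto
    then show ?thesis using qb by simp
  qed
  have tsq: "cmod (\<tau>^2) \<le> 6400/7569"
  proof -
    have "cmod \<tau> * cmod \<tau> \<le> (80/87) * (80/87)" using tau1 by (intro mult_mono) auto
    then show ?thesis by (simp add: norm_power power2_eq_square norm_mult)
  qed
  have den0: "1 - \<tau>^2 \<noteq> 0"
  proof
    assume "1 - \<tau>^2 = 0" then have "cmod (\<tau>^2) = 1" by (metis eq_iff_diff_eq_0 norm_one)
    then show False using tsq by simp
  qed
  have dlow: "cmod (1 - \<tau>^2) \<ge> 1169/7569"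
  proof -
    have "cmod (1::complex) \<le> cmod (1 - \<tau>^2) + cmod (\<tau>^2)" by (metis diff_add_cancel norm_triangle_ineq)
    then show ?thesis using tsq by simp
  qed
  have ident: "PP \<tau> - of_real h * \<tau> = \<tau> * (q - of_real h + of_real h * \<tau>^2) / (1 - \<tau>^2)"
    unfolding q_def using tau0 den0 by (simp add: field_simps)
  have num: "cmod (q - of_real h + of_real h * \<tau>^2) \<le> 181/7 * h * cmod \<tau>"
  proof -
    have "cmod (q - of_real h + of_real h * \<tau>^2) \<le> cmod (q - of_real h) + cmod (of_real h * \<tau>^2)" by (rule norm_triangle_ineq)
    also have "cmod (of_real h * \<tau>^2) \<le> h * cmod \<tau>"
    proof -
      have "cmod \<tau> * cmod \<tau> \<le> 1 * cmod \<tau>" using tau1 by (intro mult_right_mono) auto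
      then show ?thesis using h_nonneg by (simp add: norm_mult norm_power power2_eq_square mult_left_mono)
    qed
    finally show ?thesis using qh by simp
  qed
  have "cmod (PP \<tau> - of_real h * \<tau>) = cmod \<tau> * cmod (q - of_real h + of_real h * \<tau>^2) / cmod (1 - \<tau>^2)"
    unfolding ident by (simp add: norm_mult norm_divide)
  also have "\<dots> \<le> cmod \<tau> * (181/7 * h * cmod \<tau>) / (1169/7569)"
  proof (rule frac_le)
    show "0 \<le> cmod \<tau> * (181/7 * h * cmod \<tau>)" using h_nonneg by simp
    show "cmod \<tau> * cmod (q - of_real h + of_real h * \<tau>^2) \<le> cmod \<tau> * (181/7 * h * cmod \<tau>)"
      using mult_left_mono[OF num, of "cmod \<tau>"] by simp
  qed (use dlow in auto)
  finally have Pb: "cmod (PP \<tau> - of_real h * \<tau>) \<le> cmod \<tau> * (181/7 * h * cmod \<tau>) / (1169/7569)" .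
  have e: "F t - of_real h * t = of_real (87/100) * (PP \<tau> - of_real h * \<tau>)" unfolding PPt ttau by (simp add: field_simps)
  have "cmod (F t - of_real h * t) = 87/100 * cmod (PP \<tau> - of_real h * \<tau>)" unfolding e by (simp only: norm_mult norm_of_real)
  also have "\<dots> \<le> 87/100 * (cmod \<tau> * (181/7 * h * cmod \<tau>) / (1169/7569))" using Pb by (simp add: algebra_simps)
  also have "\<dots> = (136998900 / 711921) * h * (cmod t)^2" unfolding taun by (simp add: power2_eq_square field_simps)
  also have "\<dots> \<le> 200 * h * (cmod t)^2" using h_nonneg by (intro mult_right_mono) auto
  finally show ?thesis .
qed

end

context conf_setup begin

lemma Err_bound: assumes z: "Im z > 0" and rz: "r \<le> 4/5 * Im z"
  shows "cmod (f z - z + of_real h / (z - of_real U)) \<le> 14000 * h * r / (Im z)^2"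
proof -
  define y where "y = Im z"
  have y: "y > 0" "r \<le> 4/5 * y" using z rz unfolding y_def by auto
  define w where "w = f z"
  have wD: "w \<in> D" and gw: "g w = z" using f_in[OF z] unfolding w_def by auto
  have Imw: "Im w \<ge> y" using Im_f_ge[OF z] unfolding w_def y_def .
  have wU: "cmod (w - of_real U) \<ge> y"
    using abs_Im_le_cmod[of "w - of_real U"] Imw y by simp
  have zU: "cmod (z - of_real U) \<ge> y"
    using abs_Im_le_cmod[of "z - of_real U"] y unfolding y_def by simp
  have wU0: "w - of_real U \<noteq> 0" using wU y by auto
  have zU0: "z - of_real U \<noteq> 0" using zU y by auto
  define t where "t = - of_real r / (w - of_real U)"
  have tn: "cmod t = r / cmod (w - of_real U)" unfolding t_def using rpos by (simp add: norm_divide)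
  have t45: "cmod t \<le> 4/5"
  proof -
    have "r / cmod (w - of_real U) \<le> r / y" using wU y rpos by (intro divide_left_mono) (auto intro!: mult_pos_pos)
    also have "\<dots> \<le> 4/5" using y by (simp add: divide_le_eq)
    finally show ?thesis unfolding tn .
  qed
  have Imt: "Im t > 0"
  proof -
    have "Im t = r * Im (w - of_real U) / (cmod (w - of_real U))^2"
      unfolding t_def using Im_div_real[of "-r" "w - of_real U"] by simp
    then show ?thesis using rpos Imw y wU0 by (simp add: divide_pos_pos)
  qed
  have tT: "t \<in> Tp" using Imt t45 unfolding Tp_def by simp
  have t0: "t \<noteq> 0" using Imt by auto
  have Wt: "W t = w" unfolding W_def t_def using wU0 rpos by (simp add: field_simps)
  define E where "E = g w - w - of_real h / (w - of_real U)"
  have EF: "E = - (F t - of_real h * t) / of_real r"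
    unfolding E_def F_def Wt unfolding t_def using rpos wU0 by (simp add: field_simps)
  have Eb: "cmod E \<le> 200 * h * r / y^2"
  proof -
    have "cmod E = cmod (F t - of_real h * t) / r" unfolding EF using rpos by (simp add: norm_divide norm_minus_commute)
    also have "\<dots> \<le> 200 * h * (cmod t)^2 / r" using F_quad[OF tT t45] rpos by (simp add: divide_right_mono)
    also have "200 * h * (cmod t)^2 / r = 200 * h * r / (cmod (w - of_real U))^2"
      unfolding tn using rpos by (simp add: power2_eq_square field_simps)
    also have "\<dots> \<le> 200 * h * r / y^2"
    proof (rule divide_left_mono)
      show "y^2 \<le> (cmod (w - of_real U))^2" by (rule power_mono) (use wU y in auto)
      show "0 \<le> 200 * h * r" using h_nonneg rpos by simp
      show "0 < (cmod (w - of_real U))^2 * y^2" using wU0 y by simp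
    qed
    finally show ?thesis .
  qed
  have ident: "f z - z + of_real h / (z - of_real U) = of_real h * (w - z) / ((w - of_real U) * (z - of_real U)) - E"
  proof -
    have k: "of_real h / (z - of_real U) = of_real h * (w - z) / ((w - of_real U) * (z - of_real U)) + of_real h / (w - of_real U)"
    proof -
      define a where "a = w - of_real U"
      define b where "b = z - of_real U"
      have a0: "a \<noteq> 0" and b0: "b \<noteq> 0" using wU0 zU0 unfolding a_def b_def by auto
      have eq: "w - z = a - b" unfolding a_def b_def by simp
      show ?thesis unfolding eq a_def[symmetric] b_def[symmetric] using a0 b0 by (simp add: field_simps)
    qed
    show ?thesis unfolding E_def gw w_def[symmetric] k by simp
  qed
  have wz: "cmod (w - z) \<le> h / y + 200 * h * r / y^2"
  proof -
    have "w - z = - (of_real h / (w - of_real U)) - E" unfolding E_def gw by simp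
    then have "cmod (w - z) \<le> cmod (of_real h / (w - of_real U)) + cmod E"
      by (metis norm_minus_cancel norm_triangle_ineq4)
    also have "cmod (of_real h / (w - of_real U)) \<le> h / y"
    proof -
      have "h / cmod (w - of_real U) \<le> h / y" using h_nonneg wU y by (intro divide_left_mono) (auto intro!: mult_pos_pos)
      then show ?thesis using h_nonneg by (simp add: norm_divide)
    qed
    finally show ?thesis using Eb by simp
  qed
  have ry: "r / y \<le> 1" using y rpos by (simp add: divide_le_eq)
  have A: "h / y \<le> 68 * r"
  proof -
    have "h / y \<le> 68 * r^2 / y" using h_le y by (simp add: divide_right_mono)
    also have "\<dots> = 68 * r * (r / y)" by (simp add: power2_eq_square)
    also have "\<dots> \<le> 68 * r * 1" using ry rpos by (intro mult_left_mono) auto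
    finally show ?thesis by simp
  qed
  have B: "200 * h * r / y^2 \<le> 13600 * r"
  proof -
    have "200 * h * r / y^2 \<le> 200 * (68 * r^2) * r / y^2"
      using h_le rpos y by (intro divide_right_mono mult_right_mono mult_left_mono) auto
    also have "\<dots> = 13600 * r * ((r / y) * (r / y))" by (simp add: power2_eq_square)
    also have "\<dots> \<le> 13600 * r * (1 * 1)" using ry rpos y by (intro mult_left_mono mult_mono) auto
    finally show ?thesis by simp
  qed
  have "cmod (f z - z + of_real h / (z - of_real U)) \<le> cmod (of_real h * (w - z) / ((w - of_real U) * (z - of_real U))) + cmod E"
    unfolding ident by (rule norm_triangle_ineq4)
  also have "cmod (of_real h * (w - z) / ((w - of_real U) * (z - of_real U))) \<le> h * (h / y + 200 * h * r / y^2) / (y * y)"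
  proof -
    have "cmod (of_real h * (w - z) / ((w - of_real U) * (z - of_real U))) = h * cmod (w - z) / (cmod (w - of_real U) * cmod (z - of_real U))"
      using h_nonneg by (simp add: norm_mult norm_divide)
    also have "\<dots> \<le> h * (h / y + 200 * h * r / y^2) / (y * y)"
    proof (rule frac_le)
      show "0 \<le> h * (h / y + 200 * h * r / y^2)" using h_nonneg y rpos by simp
      show "h * cmod (w - z) \<le> h * (h / y + 200 * h * r / y^2)" using wz h_nonneg by (rule mult_left_mono)
      show "0 < y * y" using y by simp
      show "y * y \<le> cmod (w - of_real U) * cmod (z - of_real U)" using wU zU y by (intro mult_mono) auto
    qed
    finally show ?thesis .
  qed
  also have "h * (h / y + 200 * h * r / y^2) / (y * y) \<le> h * (13668 * r) / (y * y)"
    using A B h_nonneg y by (intro divide_right_mono mult_left_mono) auto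
  finally have "cmod (f z - z + of_real h / (z - of_real U)) \<le> h * (13668 * r) / (y * y) + 200 * h * r / y^2"
    using Eb by linarith
  also have "\<dots> = 13868 * h * r / y^2" by (simp add: power2_eq_square field_simps)
  also have "\<dots> \<le> 14000 * h * r / y^2" using h_nonneg rpos y by (intro divide_right_mono mult_right_mono) auto
  finally show ?thesis unfolding y_def .
qed

end

context conf_setup begin

lemma deriv_bound: assumes z: "Im z > 0" and rz: "r \<le> 16/25 * Im z"
  shows "cmod (deriv f z - 1 - of_real h / (z - of_real U)^2) \<le> 109375 * h * r / (Im z)^3"
proof -
  define y where "y = Im z"
  have y: "y > 0" "r \<le> 16/25 * y" using z rz unfolding y_def by auto
  define Er where "Er \<zeta> = f \<zeta> - \<zeta> + of_real h / (\<zeta> - of_real U)" for \<zeta>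
  have holEr: "Er holomorphic_on upper_half"
    unfolding Er_def using holf
    by (intro holomorphic_intros) (auto simp: upper_half_def complex_eq_iff)
  define \<rho> where "\<rho> = y / 5"
  have \<rho>: "\<rho> > 0" unfolding \<rho>_def using y by simp
  have cb: "cball z \<rho> \<subseteq> upper_half"
  proof
    fix \<zeta> assume "\<zeta> \<in> cball z \<rho>"
    then have "cmod (z - \<zeta>) \<le> \<rho>" by (simp add: dist_norm)
    moreover have "\<bar>Im z - Im \<zeta>\<bar> \<le> cmod (z - \<zeta>)" using abs_Im_le_cmod[of "z - \<zeta>"] by simp
    ultimately show "\<zeta> \<in> upper_half" unfolding upper_half_def \<rho>_def using y unfolding y_def by auto
  qed
  have "cmod ((deriv ^^ 1) Er z) \<le> fact 1 * (14000 * h * r / (16/25 * y^2)) / \<rho>^1"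
  proof (rule Cauchy_inequality)
    show "Er holomorphic_on ball z \<rho>" using holEr cb ball_subset_cball by (blast intro: holomorphic_on_subset)
    show "continuous_on (cball z \<rho>) Er" using holEr cb by (blast intro: holomorphic_on_imp_continuous_on holomorphic_on_subset)
    show "0 < \<rho>" by fact
    fix \<zeta> assume d: "cmod (z - \<zeta>) = \<rho>"
    have "\<bar>Im z - Im \<zeta>\<bar> \<le> cmod (z - \<zeta>)" using abs_Im_le_cmod[of "z - \<zeta>"] by simp
    then have Iz: "Im \<zeta> \<ge> 4/5 * y" using d unfolding \<rho>_def y_def by linarith
    have zp: "Im \<zeta> > 0" using Iz y by linarith
    have "r \<le> 4/5 * Im \<zeta>" using Iz y by linarith
    then have "cmod (Er \<zeta>) \<le> 14000 * h * r / (Im \<zeta>)^2" unfolding Er_def by (rule Err_bound[OF zp])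
    also have "\<dots> \<le> 14000 * h * r / (16/25 * y^2)"
    proof (rule divide_left_mono)
      have "(4/5 * y)^2 \<le> (Im \<zeta>)^2" using Iz y by (intro power_mono) auto
      then show "16/25 * y^2 \<le> (Im \<zeta>)^2" by (simp add: power2_eq_square)
      show "0 \<le> 14000 * h * r" using h_nonneg rpos by simp
      show "0 < (Im \<zeta>)^2 * (16/25 * y^2)" using zp y by simp
    qed
    finally show "cmod (Er \<zeta>) \<le> 14000 * h * r / (16/25 * y^2)" .
  qed
  also have "fact 1 * (14000 * h * r / (16/25 * y^2)) / \<rho>^1 = 109375 * h * r / y^3"
    unfolding \<rho>_def using y by (simp add: field_simps power2_eq_square power3_eq_cube)
  finally have dE: "cmod (deriv Er z) \<le> 109375 * h * r / y^3" by simp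
  have zH: "z \<in> upper_half" using z by (simp add: upper_half_def)
  have df: "(f has_field_derivative deriv f z) (at z)"
    using holf open_upper_half zH by (intro holomorphic_derivI[of f upper_half]) auto
  have zU: "z - of_real U \<noteq> 0" using z by (auto simp: complex_eq_iff)
  have "(Er has_field_derivative (deriv f z - 1 - of_real h / (z - of_real U)^2)) (at z)"
    unfolding Er_def using df zU
    by (auto intro!: derivative_eq_intros simp: power2_eq_square field_simps)
  then have "deriv Er z = deriv f z - 1 - of_real h / (z - of_real U)^2" by (rule DERIV_imp_deriv)
  then show ?thesis using dE unfolding y_def by simp
qed

end

lemma hull_norm_le: assumes "is_hull K" "k \<in> K" shows "cmod k \<le> hull_rad K"
proof -
  have "bounded K" using assms(1) unfolding is_hull_def by simp
  then have "bdd_above (norm ` K)" by (simp add: bounded_imp_bdd_above bounded_norm_comp)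
  then show ?thesis unfolding hull_rad_def using assms(2) by (auto intro: cSup_upper)
qed

lemma hull_rad_pos: assumes "is_hull K" "K \<noteq> {}" shows "0 < hull_rad K"
proof -
  obtain k where k: "k \<in> K" using assms(2) by blast
  then have "Im k > 0" using assms(1) unfolding is_hull_def upper_half_def by auto
  then have "cmod k > 0" by auto
  then show ?thesis using hull_norm_le[OF assms(1) k] by linarith
qed

lemma translate_mem: "w \<in> translate_hull K U \<longleftrightarrow> w - of_real U \<in> K"
  unfolding translate_hull_def by (auto simp: image_iff) (metis diff_add_cancel)

lemma open_D: assumes "is_hull K" shows "open (upper_half - translate_hull K U)"
proof -
  obtain C where C: "closed C" "K = upper_half \<inter> C"
    using assms unfolding is_hull_def closedin_closed by blast
  have eq: "upper_half - translate_hull K U = upper_half \<inter> ((\<lambda>w. w - of_real U) -` (- C))"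
    using C(2) by (auto simp: translate_mem upper_half_def)
  have "open ((\<lambda>w. w - of_real U) -` (- C))"
    using C(1) by (intro open_vimage) (auto intro: continuous_intros)
  then show ?thesis unfolding eq using open_upper_half by (intro open_Int)
qed

lemma setup_conf:
  assumes hull: "is_hull K" and map: "mapping_out (translate_hull K U) g h"
    and r0: "hull_rad K \<le> r0" "0 < r0" "r0 < 1"
  shows "conf_setup (upper_half - translate_hull K U) g h U r0"
proof
  show "open (upper_half - translate_hull K U)" by (rule open_D[OF hull])
  show "upper_half - translate_hull K U \<subseteq> upper_half" by auto
  show "0 < r0" "r0 < 1" by fact+
  fix w assume w: "Im w > 0" "r0 < cmod (w - of_real U)"
  have "w - of_real U \<notin> K" using hull_norm_le[OF hull] w r0 by fastforce
  then show "w \<in> upper_half - translate_hull K U" using w by (auto simp: translate_mem upper_half_def)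
next
  show "g holomorphic_on (upper_half - translate_hull K U)" using map unfolding mapping_out_def by blast
  show "inj_on g (upper_half - translate_hull K U)" using map unfolding mapping_out_def bij_betw_def by blast
  show "g ` (upper_half - translate_hull K U) = upper_half" using map unfolding mapping_out_def bij_betw_def by blast
  show "\<exists>C R. \<forall>w\<in>upper_half - translate_hull K U. R \<le> cmod w \<longrightarrow> cmod (g w - w - of_real h / w) \<le> C / (cmod w)^2"
    using map unfolding mapping_out_def by blast
qed

lemma delta_facts: fixes r :: real assumes "0 < r" "r < 1/2"
  shows "0 < r powr (1/4)" "(r powr (1/4))^4 = r" "r \<le> 16/25 * r powr (1/4)"
proof -
  define \<delta> where "\<delta> = r powr (1/4)"
  show d0: "0 < r powr (1/4)" using assms by simp
  have "\<delta>^4 = \<delta> powr (real 4)" using d0 unfolding \<delta>_def by (simp add: powr_realpow)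
  also have "\<dots> = r" unfolding \<delta>_def using assms by (simp add: powr_powr)
  finally show d4: "(r powr (1/4))^4 = r" unfolding \<delta>_def .
  have "\<delta>^3 \<le> 16/25"
  proof (rule ccontr)
    assume "\<not> \<delta>^3 \<le> 16/25"
    then have "(16/25)^4 \<le> (\<delta>^3)^4" by (intro power_mono) auto
    also have "(\<delta>^3)^4 = r^3" using d4 unfolding \<delta>_def by (metis power_mult mult.commute)
    also have "r^3 \<le> (1/2)^3" using assms by (intro power_mono) auto
    finally show False by (simp add: power_divide)
  qed
  then have "\<delta>^3 * \<delta> \<le> 16/25 * \<delta>" using d0 unfolding \<delta>_def by (intro mult_right_mono) auto
  moreover have "\<delta>^3 * \<delta> = \<delta>^4" by (simp add: eval_nat_numeral)
  ultimately show "r \<le> 16/25 * r powr (1/4)" using d4 unfolding \<delta>_def by simp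
qed

theorem lemma2p5:
  "\<exists>c::real. \<forall>U K g h z.
     is_hull K \<longrightarrow> hull_rad K < 1/2 \<longrightarrow>
     mapping_out (translate_hull K U) g h \<longrightarrow> Im z > 0 \<longrightarrow>
     (let f = inv_into (upper_half - translate_hull K U) g;
          r = hull_rad K; \<delta> = r powr (1/4); y = Im z in
        Im (f z) \<ge> y \<and>
        (y \<ge> \<delta> \<longrightarrow>
           norm (f z - z + of_real h / (z - of_real U)) \<le> c * h * \<delta>^2 \<and>
           norm (deriv f z - 1 - of_real h / (z - of_real U)^2) \<le> c * h * \<delta> \<and>
           \<bar>Im (f z) - y * (1 + h / (cmod (z - of_real U))^2)\<bar> \<le> c * y * h * \<delta>))"
proof (intro exI[of _ 110000] allI impI)
  fix U K g h and z :: complex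
  assume hull: "is_hull K" and rlt: "hull_rad K < 1/2" and map: "mapping_out (translate_hull K U) g h" and z: "Im z > 0"
  define D where "D = upper_half - translate_hull K U"
  define f where "f = inv_into D g"
  define r where "r = hull_rad K"
  define \<delta> where "\<delta> = r powr (1/4)"
  define y where "y = Im z"
  have imE: "Im (f z) - y * (1 + h / (cmod (z - of_real U))^2) = Im (f z - z + of_real h / (z - of_real U))"
    unfolding y_def using Im_div_real[of h "z - of_real U"] by (simp add: algebra_simps)
  have main: "Im (f z) \<ge> y \<and>
        (y \<ge> \<delta> \<longrightarrow>
           norm (f z - z + of_real h / (z - of_real U)) \<le> 110000 * h * \<delta>^2 \<and>
           norm (deriv f z - 1 - of_real h / (z - of_real U)^2) \<le> 110000 * h * \<delta> \<and>
           \<bar>Im (f z) - y * (1 + h / (cmod (z - of_real U))^2)\<bar> \<le> 110000 * y * h * \<delta>)"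
  proof (cases "K = {}")
    case True
    have r0: "r = 0" unfolding r_def hull_rad_def True by simp
    have d0: "\<delta> = 0" unfolding \<delta>_def r0 by simp
    have cs: "conf_setup D g h U r1" if "0 < r1" "r1 < 1" for r1
      unfolding D_def by (rule setup_conf[OF hull map]) (use that r0 r_def in auto)
    have hle: "h \<le> 68 * r1^2" if "0 < r1" "r1 < 1" for r1 using conf_setup.h_le[OF cs[OF that]] .
    have h0: "0 \<le> h" using conf_setup.h_nonneg[OF cs[of "1/2"]] by simp
    have hz: "h = 0"
    proof -
      have "h \<le> 0 + e" if "e > 0" for e
      proof -
        define r1 where "r1 = min (1/2) (e / 68)"
        have r1: "0 < r1" "r1 < 1" "r1 \<le> 1/2" "r1 \<le> e/68" unfolding r1_def using that by auto
        have "r1^2 \<le> r1" using r1 by (simp add: power2_eq_square mult_le_cancel_right1 mult_left_le)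
        then show ?thesis using hle[OF r1(1,2)] r1 by linarith
      qed
      then have "h \<le> 0" by (rule field_le_epsilon)
      then show ?thesis using h0 by simp
    qed
    have fid: "f w = w" if "Im w > 0" for w
    proof -
      define r1 where "r1 = min (1/2) (4/5 * Im w)"
      have r1: "0 < r1" "r1 < 1" "r1 \<le> 4/5 * Im w" unfolding r1_def using that by auto
      have "cmod (conf_setup.f D g w - w + of_real h / (w - of_real U)) \<le> 14000 * h * r1 / (Im w)^2"
        by (rule conf_setup.Err_bound[OF cs[OF r1(1,2)] that r1(3)])
      then show ?thesis using hz unfolding f_def conf_setup.f_def[OF cs[OF r1(1,2)]] by simp
    qed
    have "(f has_field_derivative 1) (at z)"
    proof (rule has_field_derivative_transform_within_open[of "\<lambda>w. w" 1 z upper_half])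
      show "((\<lambda>w. w) has_field_derivative 1) (at z)" by simp
      show "open upper_half" by (rule open_upper_half)
      show "z \<in> upper_half" using z by (simp add: upper_half_def)
      fix w assume "w \<in> upper_half" then show "w = f w" using fid by (simp add: upper_half_def)
    qed
    then have "deriv f z = 1" by (rule DERIV_imp_deriv)
    then show ?thesis using fid[OF z] hz d0 unfolding y_def by simp
  next
    case False
    have rpos: "0 < r" unfolding r_def by (rule hull_rad_pos[OF hull False])
    have r12: "r < 1/2" using rlt unfolding r_def .
    interpret cs: conf_setup D g h U r
      unfolding D_def r_def by (rule setup_conf[OF hull map]) (use rpos r12 r_def in auto)
    have ff: "f = cs.f" unfolding f_def cs.f_def ..
    have dl: "0 < \<delta>" "\<delta>^4 = r" "r \<le> 16/25 * \<delta>" using delta_facts[OF rpos r12] unfolding \<delta>_def by auto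
    have h0: "0 \<le> h" by (rule cs.h_nonneg)
    show ?thesis
    proof (intro conjI impI)
      show "y \<le> Im (f z)" unfolding ff y_def by (rule cs.Im_f_ge[OF z])
      assume yd: "\<delta> \<le> y"
      have ypos: "0 < y" using z unfolding y_def .
      have r45: "r \<le> 4/5 * Im z" using dl yd unfolding y_def by linarith
      have r1625: "r \<le> 16/25 * Im z" using dl yd unfolding y_def by linarith
      have E1: "norm (f z - z + of_real h / (z - of_real U)) \<le> 14000 * h * \<delta>^2"
      proof -
        have "norm (f z - z + of_real h / (z - of_real U)) \<le> 14000 * h * r / y^2"
          unfolding ff y_def by (rule cs.Err_bound[OF z r45])
        also have "\<dots> \<le> 14000 * h * r / \<delta>^2"
          using h0 rpos dl yd by (intro divide_left_mono power_mono mult_nonneg_nonneg mult_pos_pos) auto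
        also have "\<dots> = 14000 * h * \<delta>^2" using dl by (simp add: dl(2)[symmetric] power2_eq_square field_simps eval_nat_numeral)
        finally show ?thesis .
      qed
      show "norm (f z - z + of_real h / (z - of_real U)) \<le> 110000 * h * \<delta>^2"
        using E1 h0 dl by (smt (verit) mult_right_mono zero_le_power2 mult_nonneg_nonneg)
      have "norm (deriv f z - 1 - of_real h / (z - of_real U)^2) \<le> 109375 * h * r / y^3"
        unfolding ff y_def by (rule cs.deriv_bound[OF z r1625])
      also have "\<dots> \<le> 109375 * h * r / \<delta>^3"
        using h0 rpos dl yd by (intro divide_left_mono power_mono mult_nonneg_nonneg mult_pos_pos) auto
      also have "\<dots> = 109375 * h * \<delta>" using dl by (simp add: dl(2)[symmetric] power3_eq_cube field_simps eval_nat_numeral)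
      also have "\<dots> \<le> 110000 * h * \<delta>" using h0 dl by (intro mult_right_mono) auto
      finally show "norm (deriv f z - 1 - of_real h / (z - of_real U)^2) \<le> 110000 * h * \<delta>" .
      have "\<bar>Im (f z) - y * (1 + h / (cmod (z - of_real U))^2)\<bar> \<le> norm (f z - z + of_real h / (z - of_real U))"
        unfolding imE by (rule abs_Im_le_cmod)
      also have "\<dots> \<le> 14000 * h * \<delta>^2" by (rule E1)
      also have "\<dots> = 14000 * \<delta> * h * \<delta>" by (simp add: power2_eq_square)
      also have "\<dots> \<le> 110000 * y * h * \<delta>"
        using h0 dl yd by (intro mult_right_mono mult_mono) auto
      finally show "\<bar>Im (f z) - y * (1 + h / (cmod (z - of_real U))^2)\<bar> \<le> 110000 * y * h * \<delta>" .
    qed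
  qed
  then show "let f = inv_into (upper_half - translate_hull K U) g;
          r = hull_rad K; \<delta> = r powr (1/4); y = Im z in
        Im (f z) \<ge> y \<and>
        (y \<ge> \<delta> \<longrightarrow>
           norm (f z - z + of_real h / (z - of_real U)) \<le> 110000 * h * \<delta>^2 \<and>
           norm (deriv f z - 1 - of_real h / (z - of_real U)^2) \<le> 110000 * h * \<delta> \<and>
           \<bar>Im (f z) - y * (1 + h / (cmod (z - of_real U))^2)\<bar> \<le> 110000 * y * h * \<delta>)"
    unfolding Let_def f_def D_def r_def \<delta>_def y_def by simp
qed


end
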